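(* Let $K \subseteq L \subseteq M$ be a tower of fields of characteristic $2$ such that $L/K$ is Galois with group $\mathbb{Z}/3$ and $M/L$ is Galois with group $\mathbb{Z}/2$. Let $\sigma$ generate $\mathrm{Gal}(L/K)$. For $\ell \in L$ let $\overline{\ell}$ denote its image in $L/(F-1)L$, where $F$ is the Frobenius map $x\mapsto x^2$ (so $(F-1)L = \{x^2 - x : x \in L\}$). Suppose $M \cong L[x]/(x^2 - x - a)$ with $a \in L$, and let $d$ be the dimension of the $\mathbb{F}_2$-subspace of $L/(F-1)L$ spanned by $\overline{a}, \overline{\sigma(a)}, \overline{\sigma^2(a)}$. If $N$ is the Galois closure of $M$ over $K$, then $\mathrm{Gal}(N/K)$ is isomorphic to a semidirect product $(\mathbb{Z}/2)^d \rtimes \mathbb{Z}/3$. *)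

theory Defs
  imports "HOL-Algebra.Algebra"
begin

(* All fields live inside an ambient field of type 'a (e.g. the Galois closure N). *)

definition is_subfield :: "'a::field set \<Rightarrow> bool" where
  "is_subfield S \<longleftrightarrow> 0 \<in> S \<and> 1 \<in> S \<and>
     (\<forall>x\<in>S. \<forall>y\<in>S. x + y \<in> S \<and> x * y \<in> S) \<and>
     (\<forall>x\<in>S. - x \<in> S \<and> inverse x \<in> S)"

definition fin_ext :: "'a::field set \<Rightarrow> 'a set \<Rightarrow> bool" where
  "fin_ext E F \<longleftrightarrow> is_subfield F \<and> is_subfield E \<and> F \<subseteq> E \<and>
     (\<exists>B. finite B \<and> B \<subseteq> E \<and>
        (\<forall>x\<in>E. \<exists>c. (\<forall>b\<in>B. c b \<in> F) \<and> x = (\<Sum>b\<in>B. c b * b)))"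

(* field automorphisms of E fixing F pointwise (identity outside E, for a canonical representative) *)
definition is_rel_aut :: "'a::field set \<Rightarrow> 'a set \<Rightarrow> ('a \<Rightarrow> 'a) \<Rightarrow> bool" where
  "is_rel_aut E F \<sigma> \<longleftrightarrow> bij_betw \<sigma> E E \<and>
     (\<forall>x\<in>E. \<forall>y\<in>E. \<sigma> (x + y) = \<sigma> x + \<sigma> y \<and> \<sigma> (x * y) = \<sigma> x * \<sigma> y) \<and>
     (\<forall>x\<in>F. \<sigma> x = x) \<and> (\<forall>x. x \<notin> E \<longrightarrow> \<sigma> x = x)"

definition Gal :: "'a::field set \<Rightarrow> 'a set \<Rightarrow> ('a \<Rightarrow> 'a) monoid" where
  "Gal E F = \<lparr>carrier = {\<sigma>. is_rel_aut E F \<sigma>}, monoid.mult = (\<lambda>\<sigma> \<tau>. \<sigma> \<circ> \<tau>), one = id\<rparr>"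

definition galois_ext :: "'a::field set \<Rightarrow> 'a set \<Rightarrow> bool" where
  "galois_ext E F \<longleftrightarrow> fin_ext E F \<and> {x \<in> E. \<forall>\<sigma>\<in>carrier (Gal E F). \<sigma> x = x} = F"

definition galois_closure :: "'a::field set \<Rightarrow> 'a set \<Rightarrow> 'a set \<Rightarrow> bool" where
  "galois_closure N M K \<longleftrightarrow> is_subfield M \<and> M \<subseteq> N \<and> galois_ext N K \<and>
     (\<forall>N'. is_subfield N' \<and> M \<subseteq> N' \<and> N' \<subseteq> N \<and> galois_ext N' K \<longrightarrow> N' = N)"

definition AS_sub :: "'a::field set \<Rightarrow> 'a set" where
  "AS_sub L = {x ^ 2 - x | x. x \<in> L}"

(* the classes of v i (i \<in> S) in L/(F-1)L are F_2-linearly independent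
   (F_2-linear combinations are subset sums) *)
definition AS_indep :: "'a::field set \<Rightarrow> (nat \<Rightarrow> 'a) \<Rightarrow> nat set \<Rightarrow> bool" where
  "AS_indep L v S \<longleftrightarrow> (\<forall>T\<subseteq>S. T \<noteq> {} \<longrightarrow> (\<Sum>i\<in>T. v i) \<notin> AS_sub L)"

(* F_2-dimension of the span of the classes of v i, i \<in> I, in L/(F-1)L *)
definition AS_rank :: "'a::field set \<Rightarrow> (nat \<Rightarrow> 'a) \<Rightarrow> nat set \<Rightarrow> nat" where
  "AS_rank L v I = Max {card S | S. S \<subseteq> I \<and> AS_indep L v S}"

definition semidirect :: "('g, 'b) monoid_scheme \<Rightarrow> 'g set \<Rightarrow> 'g set \<Rightarrow> bool" where
  "semidirect G H C \<longleftrightarrow> normal H G \<and> subgroup C G \<and> H \<inter> C = {\<one>\<^bsub>G\<^esub>} \<and>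
     H <#>\<^bsub>G\<^esub> C = carrier G"

end

theory Submission
  imports Defs
begin

lemma subfieldD:
  assumes "is_subfield S"
  shows "0 \<in> S" "1 \<in> S" "x \<in> S \<Longrightarrow> y \<in> S \<Longrightarrow> x + y \<in> S"
    "x \<in> S \<Longrightarrow> y \<in> S \<Longrightarrow> x * y \<in> S" "x \<in> S \<Longrightarrow> - x \<in> S" "x \<in> S \<Longrightarrow> inverse x \<in> S"
  using assms unfolding is_subfield_def by auto

lemma subfield_diff: "is_subfield S \<Longrightarrow> x \<in> S \<Longrightarrow> y \<in> S \<Longrightarrow> x - y \<in> S"
  by (metis diff_conv_add_uminus subfieldD(3,5))

lemma subfield_div: "is_subfield S \<Longrightarrow> x \<in> S \<Longrightarrow> y \<in> S \<Longrightarrow> x / y \<in> S"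
  by (metis divide_inverse subfieldD(4,6))

lemma subfield_pow: "is_subfield S \<Longrightarrow> x \<in> S \<Longrightarrow> x ^ n \<in> S"
  by (induction n) (auto intro: subfieldD)

lemma subfield_sum: "is_subfield S \<Longrightarrow> (\<And>i. i \<in> I \<Longrightarrow> f i \<in> S) \<Longrightarrow> sum f I \<in> S"
  by (induction I rule: infinite_finite_induct) (auto intro: subfieldD)

lemma rel_autD:
  assumes "is_rel_aut E F s"
  shows "bij_betw s E E" "x \<in> E \<Longrightarrow> y \<in> E \<Longrightarrow> s (x + y) = s x + s y"
    "x \<in> E \<Longrightarrow> y \<in> E \<Longrightarrow> s (x * y) = s x * s y" "x \<in> F \<Longrightarrow> s x = x"
    "x \<notin> E \<Longrightarrow> s x = x"
  using assms unfolding is_rel_aut_def by auto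

lemma rel_aut_in: "is_rel_aut E F s \<Longrightarrow> x \<in> E \<Longrightarrow> s x \<in> E"
  using rel_autD(1) bij_betwE by blast

lemma rel_aut_inj: "is_rel_aut E F s \<Longrightarrow> x \<in> E \<Longrightarrow> y \<in> E \<Longrightarrow> s x = s y \<Longrightarrow> x = y"
  using rel_autD(1) bij_betw_imp_inj_on inj_onD by metis

lemma rel_aut_0: "is_subfield E \<Longrightarrow> is_rel_aut E F s \<Longrightarrow> s 0 = 0"
proof -
  assume E: "is_subfield E" and s: "is_rel_aut E F s"
  have "s (0 + 0) = s 0 + s 0" using rel_autD(2)[OF s, of 0 0] subfieldD(1)[OF E] by simp
  then have "s 0 + 0 = s 0 + s 0" by simp
  then show ?thesis by (metis add_left_cancel)
qed

lemma rel_aut_1: "is_subfield E \<Longrightarrow> is_rel_aut E F s \<Longrightarrow> s 1 = 1"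
proof -
  assume E: "is_subfield E" and s: "is_rel_aut E F s"
  have "s 1 = s 1 * s 1" using rel_autD(3)[OF s, of 1 1] subfieldD(2)[OF E] by simp
  moreover have "s 1 \<noteq> 0"
    using rel_aut_inj[OF s, of 1 0] rel_aut_0[OF E s] subfieldD(1,2)[OF E] by auto
  ultimately show ?thesis by (metis mult.right_neutral mult_left_cancel)
qed

lemma rel_aut_neg: "is_subfield E \<Longrightarrow> is_rel_aut E F s \<Longrightarrow> x \<in> E \<Longrightarrow> s (- x) = - s x"
  using rel_autD(2)[of E F s x "-x"] rel_aut_0[of E F s] subfieldD(5)[of E x]
  by (simp add: eq_neg_iff_add_eq_0 add.commute)

lemma rel_aut_diff: "is_subfield E \<Longrightarrow> is_rel_aut E F s \<Longrightarrow> x \<in> E \<Longrightarrow> y \<in> E \<Longrightarrow> s (x - y) = s x - s y"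
  using rel_autD(2)[of E F s x "-y"] rel_aut_neg[of E F s y] subfieldD(5)[of E y] by simp

lemma rel_aut_pow: "is_subfield E \<Longrightarrow> is_rel_aut E F s \<Longrightarrow> x \<in> E \<Longrightarrow> s (x ^ n) = s x ^ n"
  by (induction n) (auto simp: rel_aut_1 rel_autD(3) subfield_pow)

lemma rel_aut_sum: "is_subfield E \<Longrightarrow> is_rel_aut E F s \<Longrightarrow> (\<And>i. i \<in> I \<Longrightarrow> f i \<in> E)
   \<Longrightarrow> s (sum f I) = (\<Sum>i\<in>I. s (f i))"
  by (induction I rule: infinite_finite_induct) (auto simp: rel_aut_0 rel_autD(2) subfield_sum)

lemma rel_aut_comp: "is_rel_aut E F s \<Longrightarrow> is_rel_aut E F t \<Longrightarrow> is_rel_aut E F (s \<circ> t)"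
proof -
  assume s: "is_rel_aut E F s" and t: "is_rel_aut E F t"
  show ?thesis unfolding is_rel_aut_def
  proof (intro conjI ballI allI impI)
    show "bij_betw (s \<circ> t) E E" using bij_betw_trans rel_autD(1)[OF s] rel_autD(1)[OF t] by blast
  next
    fix x y assume x: "x \<in> E" and y: "y \<in> E"
    show "(s \<circ> t) (x + y) = (s \<circ> t) x + (s \<circ> t) y"
      using rel_autD(2)[OF t x y] rel_autD(2)[OF s rel_aut_in[OF t x] rel_aut_in[OF t y]] by simp
    show "(s \<circ> t) (x * y) = (s \<circ> t) x * (s \<circ> t) y"
      using rel_autD(3)[OF t x y] rel_autD(3)[OF s rel_aut_in[OF t x] rel_aut_in[OF t y]] by simp
  next
    fix x assume "x \<in> F" then show "(s \<circ> t) x = x" using rel_autD(4)[OF s] rel_autD(4)[OF t] by simp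
  next
    fix x assume "x \<notin> E" then show "(s \<circ> t) x = x" using rel_autD(5)[OF s] rel_autD(5)[OF t] by simp
  qed
qed

definition ainv :: "'a set \<Rightarrow> ('a \<Rightarrow> 'a) \<Rightarrow> 'a \<Rightarrow> 'a" where
  "ainv E s = (\<lambda>x. if x \<in> E then inv_into E s x else x)"

lemma ainv_rel_aut:
  assumes E: "is_subfield E" and FE: "F \<subseteq> E" and s: "is_rel_aut E F s"
  shows "is_rel_aut E F (ainv E s)" and "ainv E s \<circ> s = id"
proof -
  have b: "bij_betw s E E" using rel_autD(1)[OF s] .
  have bi: "bij_betw (inv_into E s) E E" using b by (simp add: bij_betw_inv_into)
  have ai: "x \<in> E \<Longrightarrow> ainv E s x = inv_into E s x" for x by (simp add: ainv_def)
  have l: "x \<in> E \<Longrightarrow> ainv E s (s x) = x" for x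
    using b by (simp add: ai bij_betwE bij_betw_inv_into_left)
  have r: "x \<in> E \<Longrightarrow> s (ainv E s x) = x" for x
    using b by (simp add: ai bij_betw_inv_into_right)
  have ie: "x \<in> E \<Longrightarrow> ainv E s x \<in> E" for x using bij_betwE[OF bi] ai by metis
  show "is_rel_aut E F (ainv E s)"
    unfolding is_rel_aut_def
  proof (intro conjI ballI allI impI)
    show "bij_betw (ainv E s) E E" using bi bij_betw_cong[of E "ainv E s" "inv_into E s" E] ai by blast
    fix x y assume x: "x \<in> E" and y: "y \<in> E"
    have "ainv E s (x + y) = ainv E s (s (ainv E s x + ainv E s y))"
      using rel_autD(2)[OF s, OF ie[OF x] ie[OF y]] r[OF x] r[OF y] by simp
    also have "\<dots> = ainv E s x + ainv E s y"
      by (rule l) (simp add: subfieldD(3)[OF E] ie x y)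
    finally show "ainv E s (x + y) = ainv E s x + ainv E s y" .
    have "ainv E s (x * y) = ainv E s (s (ainv E s x * ainv E s y))"
      using rel_autD(3)[OF s, OF ie[OF x] ie[OF y]] r[OF x] r[OF y] by simp
    also have "\<dots> = ainv E s x * ainv E s y"
      by (rule l) (simp add: subfieldD(4)[OF E] ie x y)
    finally show "ainv E s (x * y) = ainv E s x * ainv E s y" .
  next
    fix x assume "x \<in> F" then show "ainv E s x = x" using FE l rel_autD(4)[OF s] by (metis subsetD)
  next
    fix x assume "x \<notin> E" then show "ainv E s x = x" by (simp add: ainv_def)
  qed
  show "ainv E s \<circ> s = id"
  proof
    fix x show "(ainv E s \<circ> s) x = id x"
      using l rel_autD(5)[OF s, of x] by (cases "x \<in> E") (simp_all add: ainv_def)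
  qed
qed

lemma Gal_group:
  assumes E: "is_subfield E" and FE: "F \<subseteq> E"
  shows "group (Gal E F)"
proof (rule groupI)
  show "\<And>x y. x \<in> carrier (Gal E F) \<Longrightarrow> y \<in> carrier (Gal E F) \<Longrightarrow> x \<otimes>\<^bsub>Gal E F\<^esub> y \<in> carrier (Gal E F)"
    by (simp add: Gal_def rel_aut_comp)
  show "\<one>\<^bsub>Gal E F\<^esub> \<in> carrier (Gal E F)" by (simp add: Gal_def is_rel_aut_def)
  show "\<And>x y z. x \<in> carrier (Gal E F) \<Longrightarrow> y \<in> carrier (Gal E F) \<Longrightarrow> z \<in> carrier (Gal E F) \<Longrightarrow>
      x \<otimes>\<^bsub>Gal E F\<^esub> y \<otimes>\<^bsub>Gal E F\<^esub> z = x \<otimes>\<^bsub>Gal E F\<^esub> (y \<otimes>\<^bsub>Gal E F\<^esub> z)"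
    by (simp add: Gal_def o_assoc)
  show "\<And>x. x \<in> carrier (Gal E F) \<Longrightarrow> \<one>\<^bsub>Gal E F\<^esub> \<otimes>\<^bsub>Gal E F\<^esub> x = x" by (simp add: Gal_def)
  fix x assume "x \<in> carrier (Gal E F)"
  then have x: "is_rel_aut E F x" by (simp add: Gal_def)
  show "\<exists>y\<in>carrier (Gal E F). y \<otimes>\<^bsub>Gal E F\<^esub> x = \<one>\<^bsub>Gal E F\<^esub>"
  proof (rule bexI[of _ "ainv E x"])
    show "ainv E x \<in> carrier (Gal E F)" using ainv_rel_aut(1)[OF E FE x] by (simp add: Gal_def)
    show "ainv E x \<otimes>\<^bsub>Gal E F\<^esub> x = \<one>\<^bsub>Gal E F\<^esub>" using ainv_rel_aut(2)[OF E FE x] by (simp add: Gal_def)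
  qed
qed

lemma Gal_carrier: "s \<in> carrier (Gal E F) \<longleftrightarrow> is_rel_aut E F s" by (simp add: Gal_def)
lemma Gal_mult[simp]: "s \<otimes>\<^bsub>Gal E F\<^esub> t = s \<circ> t" by (simp add: Gal_def)
lemma Gal_one[simp]: "\<one>\<^bsub>Gal E F\<^esub> = id" by (simp add: Gal_def)
lemma Gal_pow: "s [^]\<^bsub>Gal E F\<^esub> (n::nat) = s ^^ n"
proof (induction n)
  case (Suc n)
  have "s [^]\<^bsub>Gal E F\<^esub> Suc n = (s [^]\<^bsub>Gal E F\<^esub> n) \<circ> s" by (simp add: Gal_def)
  also have "\<dots> = s ^^ Suc n" using Suc by (simp only: funpow_Suc_right)
  finally show ?case .
qed (simp add: Gal_def)


lemma char2_add_self: "(2::'a::field) = 0 \<Longrightarrow> (x::'a) + x = 0"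
  by (metis mult_2 mult_zero_left)

lemma char2_neg: "(2::'a::field) = 0 \<Longrightarrow> - (x::'a) = x"
  by (metis char2_add_self add_eq_0_iff)

lemma char2_minus: "(2::'a::field) = 0 \<Longrightarrow> (x::'a) - y = x + y"
  by (metis char2_neg diff_conv_add_uminus)

definition adj :: "'a::field set \<Rightarrow> 'a \<Rightarrow> 'a set" where
  "adj E b = {e + f * b | e f. e \<in> E \<and> f \<in> E}"

lemma adjI: "e \<in> E \<Longrightarrow> f \<in> E \<Longrightarrow> e + f * b \<in> adj E b"
  unfolding adj_def by blast

lemma adjE: "x \<in> adj E b \<Longrightarrow> (\<And>e f. e \<in> E \<Longrightarrow> f \<in> E \<Longrightarrow> x = e + f * b \<Longrightarrow> P) \<Longrightarrow> P"
  unfolding adj_def by blast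

lemma adj_sub: "is_subfield E \<Longrightarrow> E \<subseteq> adj E b"
  using adjI[of _ E 0 b] subfieldD(1) by fastforce

lemma adj_gen: "is_subfield E \<Longrightarrow> b \<in> adj E b"
  using adjI[of 0 E 1 b] subfieldD(1,2) by fastforce

lemma adj_subfield:
  assumes c2: "(2::'a::field) = 0" and E: "is_subfield E" and bc: "b ^ 2 - b \<in> E"
  shows "is_subfield (adj E (b::'a))"
  unfolding is_subfield_def
proof (intro conjI ballI)
  show "0 \<in> adj E b" "1 \<in> adj E b" using adj_sub[OF E] subfieldD(1,2)[OF E] by auto
  define c where "c = b ^ 2 - b"
  have c: "c \<in> E" using bc c_def by simp
  have bb: "b * b = b + c" by (simp add: c_def power2_eq_square)
  fix x assume x: "x \<in> adj E b"
  then obtain e f where e: "e \<in> E" and f: "f \<in> E" and xe: "x = e + f * b" by (rule adjE)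
  show "- x \<in> adj E b" using adjI[of "-e" E "-f" b] e f xe subfieldD(5)[OF E] by simp
  {
    fix y assume y: "y \<in> adj E b"
    then obtain e' f' where e': "e' \<in> E" and f': "f' \<in> E" and ye: "y = e' + f' * b" by (rule adjE)
    show "x + y \<in> adj E b" using adjI[of "e+e'" E "f+f'" b] e f e' f' xe ye subfieldD(3)[OF E]
      by (simp add: algebra_simps)
    have "x * y = e * e' + (e * f' + f * e') * b + f * f' * (b * b)"
      unfolding xe ye by (simp add: algebra_simps)
    then have "x * y = (e * e' + f * f' * c) + (e * f' + f * e' + f * f') * b"
      unfolding bb by (simp add: algebra_simps)
    moreover have "e * e' + f * f' * c \<in> E" "e * f' + f * e' + f * f' \<in> E"
      using e f e' f' c by (simp_all add: subfieldD(3,4)[OF E])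
    ultimately show "x * y \<in> adj E b" using adjI by metis
  }
  define n where "n = e * e + e * f + f * f * c"
  have nE: "n \<in> E" unfolding n_def using e f c by (simp add: subfieldD(3,4)[OF E])
  have prod: "x * ((e + f) + f * b) = n"
  proof -
    have "x * ((e + f) + f * b) = e * e + e * f + (e * f + e * f) * b + f * f * (b * b + b)"
      unfolding xe by (simp add: algebra_simps)
    also have "e * f + e * f = 0" using char2_add_self[OF c2] .
    also have "b * b + b = c" using bb char2_add_self[OF c2, of b] by (simp add: add.assoc)
    finally show ?thesis by (simp add: n_def)
  qed
  show "inverse x \<in> adj E b"
  proof (cases "n = 0")
    case False
    have "x * (((e + f) + f * b) / n) = 1" using prod False by (simp add: times_divide_eq_right)
    then have "inverse x = ((e + f) + f * b) / n" by (rule inverse_unique)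
    then have "inverse x = (e + f) / n + (f / n) * b" by (simp add: add_divide_distrib)
    moreover have "(e + f) / n \<in> E" "f / n \<in> E" using e f nE by (simp_all add: subfieldD(3)[OF E] subfield_div[OF E])
    ultimately show ?thesis using adjI by metis
  next
    case True
    show ?thesis
    proof (cases "x = 0")
      case True then show ?thesis using adj_sub[OF E] subfieldD(1)[OF E] by auto
    next
      case x0: False
      then have z: "(e + f) + f * b = 0" using prod True by simp
      have f0: "f \<noteq> 0" using z x0 xe by auto
      have "f * b = - (e + f)" using z by (simp add: add_eq_0_iff)
      then have "b = - (e + f) / f" using f0 by (simp add: nonzero_eq_divide_eq mult.commute)
      moreover have "- (e + f) / f \<in> E" using e f by (intro subfield_div[OF E] subfieldD(3,5)[OF E] f)
      ultimately have "b \<in> E" by simp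
      then have "x \<in> E" using xe e f by (simp add: subfieldD(3,4)[OF E])
      then show ?thesis using adj_sub[OF E] subfieldD(6)[OF E] by blast
    qed
  qed
qed

lemma span_fin_ext:
  assumes F: "is_subfield F" and E: "is_subfield E" and FE: "F \<subseteq> E"
    and I: "finite I" and vE: "v ` I \<subseteq> E"
    and sp: "\<And>x. x \<in> E \<Longrightarrow> \<exists>c. (\<forall>i\<in>I. c i \<in> F) \<and> x = (\<Sum>i\<in>I. c i * v i)"
  shows "fin_ext E F"
  unfolding fin_ext_def
proof (intro conjI F E FE exI[of _ "v ` I"] ballI)
  show "finite (v ` I)" using I by simp
  show "v ` I \<subseteq> E" by fact
  fix x assume "x \<in> E"
  then obtain c where c: "\<forall>i\<in>I. c i \<in> F" and xe: "x = (\<Sum>i\<in>I. c i * v i)" using sp by blast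
  define c' where "c' = (\<lambda>y. \<Sum>i\<in>{i\<in>I. v i = y}. c i)"
  have "x = (\<Sum>y\<in>v ` I. \<Sum>i\<in>{i\<in>I. v i = y}. c i * v i)"
    unfolding xe using sum.image_gen[OF I, of "\<lambda>i. c i * v i" v] .
  also have "\<dots> = (\<Sum>y\<in>v ` I. c' y * y)"
    unfolding c'_def sum_distrib_right by (intro sum.cong) auto
  finally have "x = (\<Sum>y\<in>v ` I. c' y * y)" .
  moreover have "\<forall>y\<in>v ` I. c' y \<in> F" unfolding c'_def using c by (auto intro!: subfield_sum[OF F])
  ultimately show "\<exists>c. (\<forall>b\<in>v ` I. c b \<in> F) \<and> x = (\<Sum>b\<in>v ` I. c b * b)" by blast
qed

lemma fin_ext_adj:
  assumes c2: "(2::'a::field) = 0" and EK: "fin_ext E K" and bc: "b ^ 2 - b \<in> E"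
  shows "fin_ext (adj E (b::'a)) K"
proof -
  have K: "is_subfield K" and E: "is_subfield E" and KE: "K \<subseteq> E" using EK by (auto simp: fin_ext_def)
  obtain B where B: "finite B" "B \<subseteq> E" and sp: "\<forall>x\<in>E. \<exists>c. (\<forall>b\<in>B. c b \<in> K) \<and> x = (\<Sum>b\<in>B. c b * b)"
    using EK unfolding fin_ext_def by blast
  define v where "v = (\<lambda>(y::'a, t::bool). y * (if t then b else 1))"
  have A: "is_subfield (adj E b)" by (rule adj_subfield[OF c2 E bc])
  show ?thesis
  proof (rule span_fin_ext[OF K A _ _ _])
    show "K \<subseteq> adj E b" using KE adj_sub[OF E] by blast
    show "finite (B \<times> (UNIV::bool set))" using B by simp
    have "\<forall>y\<in>B. y \<in> adj E b \<and> y * b \<in> adj E b"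
      using B(2) adj_sub[OF E] adjI[of 0 E _ b] subfieldD(1)[OF E] by auto
    then show "v ` (B \<times> UNIV) \<subseteq> adj E b" unfolding v_def by auto
    fix x assume "x \<in> adj E b"
    then obtain e f where e: "e \<in> E" and f: "f \<in> E" and xe: "x = e + f * b" by (rule adjE)
    obtain c where c: "\<forall>y\<in>B. c y \<in> K" "e = (\<Sum>y\<in>B. c y * y)" using sp e by blast
    obtain c' where c': "\<forall>y\<in>B. c' y \<in> K" "f = (\<Sum>y\<in>B. c' y * y)" using sp f by blast
    define d where "d = (\<lambda>(y::'a, t::bool). if t then c' y else c y)"
    have "(\<Sum>p\<in>B \<times> UNIV. d p * v p) = (\<Sum>y\<in>B. \<Sum>t\<in>UNIV. d (y, t) * v (y, t))"
      by (simp add: sum.cartesian_product case_prod_unfold)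
    also have "\<dots> = (\<Sum>y\<in>B. c y * y + c' y * y * b)"
    proof (rule sum.cong[OF refl])
      fix y show "(\<Sum>t\<in>UNIV. d (y, t) * v (y, t)) = c y * y + c' y * y * b"
        unfolding UNIV_bool d_def v_def by (simp add: mult.assoc)
    qed
    also have "\<dots> = x" unfolding xe c(2) c'(2) by (simp only: sum.distrib sum_distrib_right)
    finally have "x = (\<Sum>p\<in>B \<times> UNIV. d p * v p)" by (rule sym)
    moreover have "\<forall>p\<in>B \<times> UNIV. d p \<in> K"
    proof
      fix p assume "p \<in> B \<times> (UNIV::bool set)"
      then obtain y t where "p = (y, t)" "y \<in> B" by auto
      then show "d p \<in> K" using c c' by (cases t) (simp_all add: d_def)
    qed
    ultimately show "\<exists>d. (\<forall>p\<in>B \<times> UNIV. d p \<in> K) \<and> x = (\<Sum>p\<in>B \<times> UNIV. d p * v p)" by blast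
  qed
qed


lemma A_ainv_right:
  assumes E: "is_subfield E" and FE: "F \<subseteq> E" and s: "is_rel_aut E F s" and x: "x \<in> E"
  shows "s (ainv E s x) = x"
  using rel_autD(1)[OF s] x by (simp add: ainv_def bij_betw_inv_into_right)

lemma root_AS:
  assumes c2: "(2::'a::field) = 0" and e: "(y::'a) ^ 2 - y = z ^ 2 - z"
  shows "y = z \<or> y = z + 1"
proof -
  have "(y - z) * (y + z - 1) = 0" using e by (simp add: algebra_simps power2_eq_square)
  then have "y = z \<or> y = 1 - z" by (simp add: eq_diff_eq)
  then show ?thesis using char2_minus[OF c2, of 1 z] by (auto simp: add.commute)
qed

lemma funpow3_mod:
  assumes "f ^^ 3 = id"
  shows "f ^^ k = f ^^ (k mod 3)"
proof -
  have "f ^^ k = f ^^ (3 * (k div 3) + k mod 3)" by simp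
  also have "\<dots> = (f ^^ 3) ^^ (k div 3) \<circ> f ^^ (k mod 3)" by (simp only: funpow_add funpow_mult)
  also have "\<dots> = f ^^ (k mod 3)" using assms by simp
  finally show ?thesis .
qed

locale setting =
  fixes K L M N :: "'a::field set" and \<sigma> :: "'a \<Rightarrow> 'a" and a :: 'a
  assumes char2: "(2::'a) = 0"
    and KL: "galois_ext L K" and GLK: "Gal L K \<cong> integer_mod_group 3"
    and LM: "galois_ext M L" and GML: "Gal M L \<cong> integer_mod_group 2"
    and sigma: "\<sigma> \<in> carrier (Gal L K)"
    and sigma_gen: "generate (Gal L K) {\<sigma>} = carrier (Gal L K)"
    and aL: "a \<in> L"
    and Ma: "\<exists>\<alpha>\<in>M. \<alpha> ^ 2 - \<alpha> = a \<and> M = {l + m * \<alpha> | l m. l \<in> L \<and> m \<in> L}"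
    and N: "galois_closure N M K"
begin

lemma sK: "is_subfield K" and sL: "is_subfield L" and sM: "is_subfield M" and sN: "is_subfield N"
  and KsL: "K \<subseteq> L" and LsM: "L \<subseteq> M" and MsN: "M \<subseteq> N"
  using KL LM N by (auto simp: galois_ext_def fin_ext_def galois_closure_def)

lemma LsN: "L \<subseteq> N" and KsN: "K \<subseteq> N" using KsL LsM MsN by auto

lemma NK: "galois_ext N K" using N by (simp add: galois_closure_def)

abbreviation "G \<equiv> Gal N K"

lemma grpG: "group G" by (rule Gal_group[OF sN KsN])
lemma grpL: "group (Gal L K)" by (rule Gal_group[OF sL KsL])

lemma GD: "g \<in> carrier G \<Longrightarrow> is_rel_aut N K g" by (simp add: Gal_carrier)

lemma fixG: "x \<in> N \<Longrightarrow> (\<And>g. g \<in> carrier G \<Longrightarrow> g x = x) \<Longrightarrow> x \<in> K"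
  using NK unfolding galois_ext_def by blast

lemma fixL: "x \<in> L \<Longrightarrow> (\<And>g. g \<in> carrier (Gal L K) \<Longrightarrow> g x = x) \<Longrightarrow> x \<in> K"
  using KL unfolding galois_ext_def by blast

lemma sig: "is_rel_aut L K \<sigma>" using sigma by (simp add: Gal_carrier)

lemma cardGL: "card (carrier (Gal L K)) = 3"
  using iso_same_card[OF GLK] by (simp add: carrier_integer_mod_group)

lemma finGL: "finite (carrier (Gal L K))" using cardGL card.infinite by fastforce

lemma sig3: "\<sigma> ^^ 3 = id"
proof -
  have "\<sigma> [^]\<^bsub>Gal L K\<^esub> order (Gal L K) = \<one>\<^bsub>Gal L K\<^esub>"
    by (rule group.pow_order_eq_1[OF grpL sigma])
  then show ?thesis using cardGL by (simp add: order_def Gal_pow)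
qed

lemma sigk: "\<sigma> ^^ k = \<sigma> ^^ (k mod 3)" by (rule funpow3_mod[OF sig3])

lemma carrierGL: "carrier (Gal L K) = {\<sigma> ^^ k | k. k < 3}"
proof -
  have "carrier (Gal L K) = {\<sigma> [^]\<^bsub>Gal L K\<^esub> k | k. k \<in> (UNIV :: nat set)}"
    using group.generate_pow_on_finite_carrier[OF grpL finGL sigma] sigma_gen by simp
  also have "\<dots> = {\<sigma> ^^ k | k. k < 3}"
  proof (intro equalityI subsetI)
    fix x assume "x \<in> {\<sigma> [^]\<^bsub>Gal L K\<^esub> k | k. k \<in> (UNIV :: nat set)}"
    then obtain k where "x = \<sigma> ^^ k" by (auto simp: Gal_pow)
    then have "x = \<sigma> ^^ (k mod 3)" using sigk by simp
    then show "x \<in> {\<sigma> ^^ k | k. k < 3}" by fastforce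
  next
    fix x assume "x \<in> {\<sigma> ^^ k | k. k < 3}"
    then show "x \<in> {\<sigma> [^]\<^bsub>Gal L K\<^esub> k | k. k \<in> (UNIV :: nat set)}" by (auto simp: Gal_pow)
  qed
  finally show ?thesis .
qed

lemma carrierGL': "carrier (Gal L K) = {id, \<sigma>, \<sigma> ^^ 2}"
  unfolding carrierGL
proof (intro equalityI subsetI)
  fix x assume "x \<in> {\<sigma> ^^ k | k. k < 3}"
  then obtain k where "k < 3" "x = \<sigma> ^^ k" by blast
  then show "x \<in> {id, \<sigma>, \<sigma> ^^ 2}" by (cases k) (auto simp: less_Suc_eq numeral_2_eq_2)
next
  fix x assume "x \<in> {id, \<sigma>, \<sigma> ^^ 2}"
  then show "x \<in> {\<sigma> ^^ k | k. k < 3}"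
    by (elim insertE) (auto intro: exI[of _ 0] exI[of _ 1] exI[of _ 2])
qed

lemma sig_distinct: "id \<noteq> \<sigma>" "\<sigma> \<noteq> \<sigma> ^^ 2" "id \<noteq> \<sigma> ^^ 2"
proof -
  have c: "card {id, \<sigma>, \<sigma> ^^ 2} = 3" using cardGL carrierGL' by simp
  show "id \<noteq> \<sigma>" using c by (auto simp: card_insert_if split: if_splits)
  show "\<sigma> \<noteq> \<sigma> ^^ 2" using c by (auto simp: card_insert_if split: if_splits)
  show "id \<noteq> \<sigma> ^^ 2" using c by (auto simp: card_insert_if split: if_splits)
qed

lemma sigpow_aut: "is_rel_aut L K (\<sigma> ^^ k)"
  using monoid.nat_pow_closed[OF group.is_monoid[OF grpL] sigma, of k] by (simp add: Gal_pow Gal_carrier)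

lemma Gpow: "g \<in> carrier G \<Longrightarrow> g ^^ k \<in> carrier G"
  using monoid.nat_pow_closed[OF group.is_monoid[OF grpG], of g k] by (simp add: Gal_pow)

lemma Gcomp: "g \<in> carrier G \<Longrightarrow> h \<in> carrier G \<Longrightarrow> g \<circ> h \<in> carrier G"
  using monoid.m_closed[OF group.is_monoid[OF grpG], of g h] by simp

lemma Gid: "id \<in> carrier G"
  using monoid.one_closed[OF group.is_monoid[OF grpG]] by simp

lemma Gainv: "g \<in> carrier G \<Longrightarrow> ainv N g \<in> carrier G"
  using ainv_rel_aut(1)[OF sN KsN] by (simp add: Gal_carrier)

lemma Gainv_l: "g \<in> carrier G \<Longrightarrow> ainv N g (g x) = x"
  using ainv_rel_aut(2)[OF sN KsN, of g] by (simp add: Gal_carrier fun_eq_iff)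

lemma Gainv_r: "g \<in> carrier G \<Longrightarrow> x \<in> N \<Longrightarrow> g (ainv N g x) = x"
  using A_ainv_right[OF sN KsN] by (simp add: Gal_carrier)

end

context setting begin

lemma Nadd: "x \<in> N \<Longrightarrow> y \<in> N \<Longrightarrow> x + y \<in> N" and Nmul: "x \<in> N \<Longrightarrow> y \<in> N \<Longrightarrow> x * y \<in> N"
  and Ndiff: "x \<in> N \<Longrightarrow> y \<in> N \<Longrightarrow> x - y \<in> N"
  using subfieldD(3,4)[OF sN] subfield_diff[OF sN] by auto
lemma Ladd: "x \<in> L \<Longrightarrow> y \<in> L \<Longrightarrow> x + y \<in> L" and Lmul: "x \<in> L \<Longrightarrow> y \<in> L \<Longrightarrow> x * y \<in> L"
  and Ldiff: "x \<in> L \<Longrightarrow> y \<in> L \<Longrightarrow> x - y \<in> L"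
  using subfieldD(3,4)[OF sL] subfield_diff[OF sL] by auto
lemma L1: "1 \<in> L" and L0: "0 \<in> L" using subfieldD(1,2)[OF sL] by auto
lemma N1: "1 \<in> N" and N0: "0 \<in> N" using subfieldD(1,2)[OF sN] by auto
lemma LN: "x \<in> L \<Longrightarrow> x \<in> N" using LsN by auto
lemma Lpow: "x \<in> L \<Longrightarrow> x ^ n \<in> L" and Npow: "x \<in> N \<Longrightarrow> x ^ n \<in> N"
  using subfield_pow[OF sL] subfield_pow[OF sN] by auto

lemmas closL = Ladd Lmul Ldiff L1 L0 Lpow
lemmas closN = Nadd Nmul Ndiff N1 N0 Npow

lemma sL_in: "x \<in> L \<Longrightarrow> \<sigma> x \<in> L" using rel_aut_in[OF sig] .
lemma sLk_in: "x \<in> L \<Longrightarrow> (\<sigma> ^^ k) x \<in> L" using rel_aut_in[OF sigpow_aut] .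
lemma s_add: "x \<in> L \<Longrightarrow> y \<in> L \<Longrightarrow> \<sigma> (x + y) = \<sigma> x + \<sigma> y"
  and s_mul: "x \<in> L \<Longrightarrow> y \<in> L \<Longrightarrow> \<sigma> (x * y) = \<sigma> x * \<sigma> y"
  and s_diff: "x \<in> L \<Longrightarrow> y \<in> L \<Longrightarrow> \<sigma> (x - y) = \<sigma> x - \<sigma> y"
  and s_pow: "x \<in> L \<Longrightarrow> \<sigma> (x ^ n) = \<sigma> x ^ n"
  and s_one: "\<sigma> 1 = 1"
  using rel_autD(2,3)[OF sig] rel_aut_diff[OF sL sig] rel_aut_pow[OF sL sig] rel_aut_1[OF sL sig] by auto
lemma sk_add: "x \<in> L \<Longrightarrow> y \<in> L \<Longrightarrow> (\<sigma>^^k) (x + y) = (\<sigma>^^k) x + (\<sigma>^^k) y"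
  and sk_mul: "x \<in> L \<Longrightarrow> y \<in> L \<Longrightarrow> (\<sigma>^^k) (x * y) = (\<sigma>^^k) x * (\<sigma>^^k) y"
  and sk_diff: "x \<in> L \<Longrightarrow> y \<in> L \<Longrightarrow> (\<sigma>^^k) (x - y) = (\<sigma>^^k) x - (\<sigma>^^k) y"
  and sk_pow: "x \<in> L \<Longrightarrow> (\<sigma>^^k) (x ^ n) = (\<sigma>^^k) x ^ n"
  using rel_autD(2,3)[OF sigpow_aut] rel_aut_diff[OF sL sigpow_aut] rel_aut_pow[OF sL sigpow_aut] by auto

lemma g_add: "g \<in> carrier G \<Longrightarrow> x \<in> N \<Longrightarrow> y \<in> N \<Longrightarrow> g (x + y) = g x + g y"
  and g_mul: "g \<in> carrier G \<Longrightarrow> x \<in> N \<Longrightarrow> y \<in> N \<Longrightarrow> g (x * y) = g x * g y"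
  and g_diff: "g \<in> carrier G \<Longrightarrow> x \<in> N \<Longrightarrow> y \<in> N \<Longrightarrow> g (x - y) = g x - g y"
  and g_pow: "g \<in> carrier G \<Longrightarrow> x \<in> N \<Longrightarrow> g (x ^ n) = g x ^ n"
  and g_one: "g \<in> carrier G \<Longrightarrow> g 1 = 1"
  and g_K: "g \<in> carrier G \<Longrightarrow> x \<in> K \<Longrightarrow> g x = x"
  and g_in: "g \<in> carrier G \<Longrightarrow> x \<in> N \<Longrightarrow> g x \<in> N"
  and g_out: "g \<in> carrier G \<Longrightarrow> x \<notin> N \<Longrightarrow> g x = x"
  using rel_autD(2,3,4,5)[OF GD] rel_aut_diff[OF sN GD] rel_aut_pow[OF sN GD] rel_aut_1[OF sN GD]
    rel_aut_in[OF GD] by auto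

lemma s_out: "x \<notin> L \<Longrightarrow> (\<sigma> ^^ k) x = x" using rel_autD(5)[OF sigpow_aut] .
lemma s_K: "x \<in> K \<Longrightarrow> (\<sigma> ^^ k) x = x" using rel_autD(4)[OF sigpow_aut] .

lemma s3: "\<sigma> (\<sigma> (\<sigma> x)) = x"
  using sig3 by (simp add: numeral_3_eq_3 fun_eq_iff)

lemma fix_sigma: "x \<in> L \<Longrightarrow> \<sigma> x = x \<Longrightarrow> x \<in> K"
  by (rule fixL) (auto simp: carrierGL' numeral_2_eq_2)

lemma x0_ex: "\<exists>x0\<in>L. \<sigma> x0 \<noteq> x0"
proof (rule ccontr)
  assume "\<not> ?thesis"
  then have "\<sigma> = id" using rel_autD(5)[OF sig] by (auto simp: fun_eq_iff)
  then show False using sig_distinct(1) by simp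
qed

lemma LneK: "\<exists>x\<in>L. x \<notin> K" using x0_ex s_K[of _ 1] by auto

lemma conj3:
  assumes g: "g \<in> carrier G" and l: "l \<in> L"
  shows "g l = l \<or> g l = \<sigma> l \<or> g l = \<sigma> (\<sigma> l)"
proof -
  define l1 where "l1 = \<sigma> l"
  define l2 where "l2 = \<sigma> l1"
  have l1: "l1 \<in> L" and l2: "l2 \<in> L" using l by (simp_all add: l1_def l2_def sL_in)
  have sl2: "\<sigma> l2 = l" by (simp add: l1_def l2_def s3)
  define e1 where "e1 = l + l1 + l2"
  define e2 where "e2 = l * l1 + l * l2 + l1 * l2"
  define e3 where "e3 = l * l1 * l2"
  have sl: "\<sigma> l = l1" and sl1: "\<sigma> l1 = l2" by (simp_all add: l1_def l2_def)
  have e1: "e1 \<in> K"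
  proof (rule fix_sigma)
    show "e1 \<in> L" unfolding e1_def using l l1 l2 by (simp add: closL)
    have "\<sigma> e1 = l1 + l2 + l" unfolding e1_def using l l1 l2 by (simp add: s_add closL sl sl1 sl2)
    then show "\<sigma> e1 = e1" by (simp add: e1_def algebra_simps)
  qed
  have e2: "e2 \<in> K"
  proof (rule fix_sigma)
    show "e2 \<in> L" unfolding e2_def using l l1 l2 by (simp add: closL)
    have "\<sigma> e2 = l1 * l2 + l1 * l + l2 * l" unfolding e2_def using l l1 l2 by (simp add: s_add s_mul closL sl sl1 sl2)
    then show "\<sigma> e2 = e2" by (simp add: e2_def algebra_simps)
  qed
  have e3: "e3 \<in> K"
  proof (rule fix_sigma)
    show "e3 \<in> L" unfolding e3_def using l l1 l2 by (simp add: closL)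
    have "\<sigma> e3 = l1 * l2 * l" unfolding e3_def using l l1 l2 by (simp add: s_mul closL sl sl1 sl2)
    then show "\<sigma> e3 = e3" by (simp add: e3_def algebra_simps)
  qed
  have eN: "e1 \<in> N" "e2 \<in> N" "e3 \<in> N" using e1 e2 e3 KsN by auto
  have lN: "l \<in> N" using l LN by simp
  have p0: "l * l * l - e1 * (l * l) + e2 * l - e3 = 0"
    by (simp add: e1_def e2_def e3_def algebra_simps)
  have "g (l * l * l - e1 * (l * l) + e2 * l - e3) = g l * g l * g l - e1 * (g l * g l) + e2 * g l - e3"
    using g lN eN by (simp add: closN g_add g_mul g_diff g_K e1 e2 e3)
  then have "g l * g l * g l - e1 * (g l * g l) + e2 * g l - e3 = 0" using p0 g by (simp add: g_K N0 g_out[of g 0] rel_aut_0[OF sN GD[OF g]])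
  moreover have "\<And>z. (z - l) * (z - l1) * (z - l2) = z * z * z - e1 * (z * z) + e2 * z - e3"
    by (simp add: e1_def e2_def e3_def algebra_simps)
  ultimately have "(g l - l) * (g l - l1) * (g l - l2) = 0" by metis
  then show ?thesis by (auto simp: l1_def l2_def)
qed

end

context setting begin

lemma gL: "g \<in> carrier G \<Longrightarrow> x \<in> L \<Longrightarrow> g x \<in> L"
  using conj3[of g x] sL_in[of x] sL_in[of "\<sigma> x"] by auto

definition acts :: "('a \<Rightarrow> 'a) \<Rightarrow> nat \<Rightarrow> bool" where
  "acts g k \<longleftrightarrow> (\<forall>x\<in>L. g x = (\<sigma> ^^ k) x)"

lemma acts_ex: assumes g: "g \<in> carrier G" shows "\<exists>k<3. acts g k"
proof -
  define rg where "rg = (\<lambda>x. if x \<in> L then g x else x)"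
  have inj: "inj_on rg L"
  proof (rule inj_onI)
    fix x y assume "x \<in> L" "y \<in> L" "rg x = rg y"
    then show "x = y" using rel_aut_inj[OF GD[OF g]] LN by (simp add: rg_def)
  qed
  have img: "rg ` L = L"
  proof (intro equalityI subsetI)
    fix y assume "y \<in> rg ` L" then show "y \<in> L" using gL[OF g] by (auto simp: rg_def)
  next
    fix y assume y: "y \<in> L"
    have x: "ainv N g y \<in> L" using gL[OF Gainv[OF g] y] .
    have "rg (ainv N g y) = y" using Gainv_r[OF g LN[OF y]] x by (simp add: rg_def)
    then show "y \<in> rg ` L" using x by force
  qed
  have "is_rel_aut L K rg" unfolding is_rel_aut_def
  proof (intro conjI ballI allI impI)
    show "bij_betw rg L L" using inj img by (simp add: bij_betw_def)
    fix x y assume x: "x \<in> L" and y: "y \<in> L"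
    show "rg (x + y) = rg x + rg y" using x y g by (simp add: rg_def closL g_add LN)
    show "rg (x * y) = rg x * rg y" using x y g by (simp add: rg_def closL g_mul LN)
  next
    fix x assume "x \<in> K" then show "rg x = x" using g KsL by (auto simp: rg_def g_K)
  next
    fix x assume "x \<notin> L" then show "rg x = x" by (simp add: rg_def)
  qed
  then have "rg \<in> carrier (Gal L K)" by (simp add: Gal_carrier)
  then have "rg \<in> {\<sigma> ^^ k | k. k < 3}" using carrierGL by simp
  then obtain k where k: "k < 3" "rg = \<sigma> ^^ k" by blast
  have "acts g k" unfolding acts_def
  proof
    fix x assume "x \<in> L" then show "g x = (\<sigma> ^^ k) x" using k(2) by (metis rg_def)
  qed
  then show ?thesis using k(1) by blast
qed

lemma acts_mod: "acts g k \<longleftrightarrow> acts g (k mod 3)"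
  unfolding acts_def using sigk by metis

lemma acts_comp: "acts g j \<Longrightarrow> acts h k \<Longrightarrow> h \<in> carrier G \<Longrightarrow> acts (g \<circ> h) (j + k)"
  unfolding acts_def by (simp add: funpow_add sLk_in)

lemma acts_id: "acts id 0" by (simp add: acts_def)

lemma sigpow_eq: assumes "\<forall>x\<in>L. (\<sigma> ^^ i) x = (\<sigma> ^^ j) x" shows "\<sigma> ^^ i = \<sigma> ^^ j"
proof
  fix x show "(\<sigma> ^^ i) x = (\<sigma> ^^ j) x" using assms s_out by (cases "x \<in> L") auto
qed

lemma sig_inj3: assumes "\<sigma> ^^ i = \<sigma> ^^ j" "i < 3" "j < 3" shows "i = j"
proof -
  have *: "k < 3 \<Longrightarrow> k = 0 \<or> k = 1 \<or> k = 2" for k :: nat by auto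
  show ?thesis using *[OF assms(2)] *[OF assms(3)] assms(1) sig_distinct by auto
qed

lemma acts_uniq: "acts g i \<Longrightarrow> acts g j \<Longrightarrow> i < 3 \<Longrightarrow> j < 3 \<Longrightarrow> i = j"
  unfolding acts_def by (metis sig_inj3 sigpow_eq)

lemma acts_pow: assumes "t \<in> carrier G" "acts t 1" shows "acts (t ^^ k) k"
proof (induction k)
  case 0 then show ?case by (simp add: acts_def)
next
  case (Suc k)
  have "acts (t \<circ> t ^^ k) (1 + k)" by (rule acts_comp[OF assms(2) Suc Gpow[OF assms(1)]])
  moreover have "t ^^ Suc k = t \<circ> t ^^ k" by (simp only: funpow.simps(2))
  ultimately show ?case by (simp only: add.commute[of 1 k] Suc_eq_plus1)
qed

lemma tau_ex: "\<exists>t\<in>carrier G. acts t 1"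
proof (rule ccontr)
  assume no: "\<not> ?thesis"
  have all0: "acts g 0" if g: "g \<in> carrier G" for g
  proof -
    obtain k where k: "k < 3" "acts g k" using acts_ex[OF g] by blast
    have "k \<noteq> 1" using k no g by blast
    moreover have "k \<noteq> 2"
    proof
      assume "k = 2"
      then have "acts (g \<circ> g) 4" using acts_comp[of g 2 g 2] k g by simp
      then have "acts (g \<circ> g) 1" using acts_mod[of "g \<circ> g" 4] by simp
      then show False using no Gcomp[OF g g] by blast
    qed
    ultimately have "k = 0" using k(1) by linarith
    then show ?thesis using k(2) by simp
  qed
  have "L \<subseteq> K"
  proof
    fix x assume x: "x \<in> L"
    show "x \<in> K" by (rule fixG[OF LN[OF x]]) (use all0 x in \<open>simp add: acts_def\<close>)
  qed
  then show False using LneK by blast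
qed

definition tau where "tau = (SOME t. t \<in> carrier G \<and> acts t 1)"

lemma tau: "tau \<in> carrier G" "acts tau 1"
  using someI_ex[of "\<lambda>t. t \<in> carrier G \<and> acts t 1"] tau_ex unfolding tau_def by blast+

definition alpha where "alpha = (SOME al. al \<in> M \<and> al ^ 2 - al = a \<and> M = {l + m * al | l m. l \<in> L \<and> m \<in> L})"

lemma alpha: "alpha \<in> M" "alpha ^ 2 - alpha = a" "M = adj L alpha"
  using someI_ex[OF Ma[unfolded Bex_def]] unfolding alpha_def adj_def by blast+

lemma alphaN: "alpha \<in> N" using alpha(1) MsN by auto

definition alk :: "nat \<Rightarrow> 'a" where "alk k = (tau ^^ k) alpha"

lemma alk_N: "alk k \<in> N" unfolding alk_def using g_in[OF Gpow[OF tau(1)] alphaN] .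

lemma alk_eq: "alk k ^ 2 - alk k = (\<sigma> ^^ k) a"
proof -
  have "alk k ^ 2 - alk k = (tau ^^ k) (alpha ^ 2 - alpha)"
    unfolding alk_def using Gpow[OF tau(1)] alphaN by (simp add: g_diff g_pow closN)
  also have "\<dots> = (\<sigma> ^^ k) a" using alpha(2) acts_pow[OF tau, of k] aL by (simp add: acts_def)
  finally show ?thesis .
qed

lemma alk0: "alk 0 = alpha" by (simp add: alk_def)

lemma Gal_triv: "carrier (Gal L L) = {id}"
proof (intro equalityI subsetI)
  fix s :: "'a \<Rightarrow> 'a" assume "s \<in> carrier (Gal L L)"
  then have "is_rel_aut L L s" by (simp add: Gal_carrier)
  then have "\<forall>x. s x = x" using rel_autD(4,5) by metis
  then show "s \<in> {id}" by (simp add: fun_eq_iff)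
next
  fix s :: "'a \<Rightarrow> 'a" assume "s \<in> {id}" then show "s \<in> carrier (Gal L L)" by (simp add: Gal_carrier is_rel_aut_def)
qed

lemma AS_L: "y \<in> L \<Longrightarrow> x ^ 2 - x = y ^ 2 - y \<Longrightarrow> x \<in> L"
  using root_AS[OF char2] by (metis L1 Ladd)

lemma a_notAS: "a \<notin> AS_sub L"
proof
  assume "a \<in> AS_sub L"
  then obtain y where y: "y \<in> L" "a = y ^ 2 - y" by (auto simp: AS_sub_def)
  have alL: "alpha \<in> L" using AS_L[OF y(1)] alpha(2) y(2) by simp
  have "M \<subseteq> L"
  proof
    fix x assume "x \<in> M"
    then have "x \<in> adj L alpha" using alpha(3) by simp
    then obtain e f where "e \<in> L" "f \<in> L" "x = e + f * alpha" by (rule adjE)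
    then show "x \<in> L" using alL by (simp add: closL)
  qed
  then have "M = L" using LsM by auto
  then have "card (carrier (Gal M L)) = 1" using Gal_triv by simp
  moreover have "card (carrier (Gal M L)) = 2"
    using iso_same_card[OF GML] by (simp add: carrier_integer_mod_group)
  ultimately show False by simp
qed

lemma g_alk: assumes g: "g \<in> carrier G" and j: "acts g j"
  shows "g (alk k) = alk ((j + k) mod 3) \<or> g (alk k) = alk ((j + k) mod 3) + 1"
proof -
  have "g (alk k ^ 2 - alk k) = g (alk k) ^ 2 - g (alk k)"
    using g alk_N by (simp add: g_diff g_pow closN)
  then have "g (alk k) ^ 2 - g (alk k) = g ((\<sigma> ^^ k) a)" using alk_eq[of k] by simp
  also have "\<dots> = (\<sigma> ^^ (j + k)) a" using j sLk_in[OF aL] by (simp add: acts_def funpow_add)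
  also have "\<dots> = (\<sigma> ^^ ((j + k) mod 3)) a" using sigk by metis
  also have "\<dots> = alk ((j + k) mod 3) ^ 2 - alk ((j + k) mod 3)" using alk_eq by simp
  finally show ?thesis using root_AS[OF char2] by blast
qed

end

lemma adj_subset: "is_subfield S \<Longrightarrow> E \<subseteq> S \<Longrightarrow> b \<in> S \<Longrightarrow> adj E b \<subseteq> S"
  by (auto elim!: adjE intro!: subfieldD(3,4))

lemma adj_mono: "is_subfield E \<Longrightarrow> E \<subseteq> adj E b" by (rule adj_sub)

context setting begin

lemma adj_stable:
  assumes g: "g \<in> carrier G" and S: "is_subfield S" and EN: "E \<subseteq> N" and b: "b \<in> N"
    and gE: "\<And>x. x \<in> E \<Longrightarrow> g x \<in> S" and gb: "g b \<in> S" and x: "x \<in> adj E b"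
  shows "g x \<in> S"
proof -
  obtain e f where e: "e \<in> E" and f: "f \<in> E" and xe: "x = e + f * b" using x by (rule adjE)
  have eN: "e \<in> N" "f \<in> N" using e f EN by auto
  have "g x = g e + g f * g b" using eN b g by (simp add: xe g_add g_mul closN)
  then show ?thesis using gE[OF e] gE[OF f] gb by (simp add: subfieldD(3,4)[OF S])
qed

lemma adj_agree:
  assumes g: "g \<in> carrier G" and h: "h \<in> carrier G" and EN: "E \<subseteq> N" and b: "b \<in> N"
    and gE: "\<And>x. x \<in> E \<Longrightarrow> g x = h x" and gb: "g b = h b" and x: "x \<in> adj E b"
  shows "g x = h x"
proof -
  obtain e f where e: "e \<in> E" and f: "f \<in> E" and xe: "x = e + f * b" using x by (rule adjE)
  have eN: "e \<in> N" "f \<in> N" using e f EN by auto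
  have "g x = g e + g f * g b" using eN b g by (simp add: xe g_add g_mul closN)
  moreover have "h x = h e + h f * h b" using eN b h by (simp add: xe g_add g_mul closN)
  ultimately show ?thesis using gE[OF e] gE[OF f] gb by simp
qed

abbreviation "L1 \<equiv> adj L (alk 0)"
abbreviation "L2 \<equiv> adj L1 (alk 1)"
abbreviation "L3 \<equiv> adj L2 (alk 2)"

lemma alkL: "alk k ^ 2 - alk k \<in> L" using alk_eq sLk_in[OF aL] by simp

lemma sL1: "is_subfield L1" by (rule adj_subfield[OF char2 sL alkL])
lemma LL1: "L \<subseteq> L1" by (rule adj_sub[OF sL])
lemma sL2: "is_subfield L2" using adj_subfield[OF char2 sL1] alkL LL1 by blast
lemma L1L2: "L1 \<subseteq> L2" by (rule adj_sub[OF sL1])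
lemma sL3: "is_subfield L3" using adj_subfield[OF char2 sL2] alkL LL1 L1L2 by blast
lemma L2L3: "L2 \<subseteq> L3" by (rule adj_sub[OF sL2])

lemma L1M: "L1 = M" using alpha(3) alk0 by simp

lemma L1N: "L1 \<subseteq> N" using adj_subset[OF sN LsN alk_N] .
lemma L2N: "L2 \<subseteq> N" using adj_subset[OF sN L1N alk_N] .
lemma L3N: "L3 \<subseteq> N" using adj_subset[OF sN L2N alk_N] .

lemma alk_L3: "k < 3 \<Longrightarrow> alk k \<in> L3"
proof -
  assume "k < 3"
  then have "k = 0 \<or> k = 1 \<or> k = 2" by auto
  moreover have "alk 0 \<in> L3" using adj_gen[OF sL] L1L2 L2L3 by blast
  moreover have "alk 1 \<in> L3" using adj_gen[OF sL1] L2L3 by blast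
  moreover have "alk 2 \<in> L3" using adj_gen[OF sL2] by blast
  ultimately show ?thesis by blast
qed

lemma LL3: "L \<subseteq> L3" using LL1 L1L2 L2L3 by blast

lemma fL3: "fin_ext L3 K"
proof -
  have "fin_ext L K" using KL by (simp add: galois_ext_def)
  then have "fin_ext L1 K" using fin_ext_adj[OF char2 _ alkL] by blast
  then have "fin_ext L2 K" using fin_ext_adj[OF char2 _ ] alkL LL1 by blast
  then show "fin_ext L3 K" using fin_ext_adj[OF char2 _ ] alkL LL1 L1L2 by blast
qed

lemma stableL3: assumes g: "g \<in> carrier G" and x: "x \<in> L3" shows "g x \<in> L3"
proof -
  obtain j where j: "j < 3" "acts g j" using acts_ex[OF g] by blast
  have ga: "g (alk k) \<in> L3" for k
  proof -
    have "alk ((j + k) mod 3) \<in> L3" by (rule alk_L3) simp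
    moreover have "alk ((j + k) mod 3) + 1 \<in> L3" using calculation subfieldD(2,3)[OF sL3] by blast
    ultimately show ?thesis using g_alk[OF g j(2), of k] by auto
  qed
  have h0: "y \<in> L \<Longrightarrow> g y \<in> L3" for y using gL[OF g] LL3 by blast
  have h1: "y \<in> L1 \<Longrightarrow> g y \<in> L3" for y by (rule adj_stable[OF g sL3 LsN alk_N h0 ga])
  have h2: "y \<in> L2 \<Longrightarrow> g y \<in> L3" for y by (rule adj_stable[OF g sL3 L1N alk_N h1 ga])
  show ?thesis by (rule adj_stable[OF g sL3 L2N alk_N h2 ga x])
qed

lemma L3_galois: "galois_ext L3 K"
  unfolding galois_ext_def
proof (intro conjI fL3 equalityI subsetI)
  fix x assume "x \<in> {x \<in> L3. \<forall>s\<in>carrier (Gal L3 K). s x = x}"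
  then have x: "x \<in> L3" and fx: "\<And>s. s \<in> carrier (Gal L3 K) \<Longrightarrow> s x = x" by auto
  show "x \<in> K"
  proof (rule fixG)
    show "x \<in> N" using x L3N by blast
    fix g assume g: "g \<in> carrier G"
    define rg where "rg = (\<lambda>x. if x \<in> L3 then g x else x)"
    have inj: "inj_on rg L3"
    proof (rule inj_onI)
      fix x y assume "x \<in> L3" "y \<in> L3" "rg x = rg y"
      then show "x = y" using rel_aut_inj[OF GD[OF g]] L3N by (auto simp: rg_def)
    qed
    have img: "rg ` L3 = L3"
    proof (intro equalityI subsetI)
      fix y assume "y \<in> rg ` L3" then show "y \<in> L3" using stableL3[OF g] by (auto simp: rg_def)
    next
      fix y assume y: "y \<in> L3"
      have xx: "ainv N g y \<in> L3" using stableL3[OF Gainv[OF g] y] .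
      have "rg (ainv N g y) = y" using Gainv_r[OF g] y L3N xx by (auto simp: rg_def)
      then show "y \<in> rg ` L3" using xx by force
    qed
    have "is_rel_aut L3 K rg" unfolding is_rel_aut_def
    proof (intro conjI ballI allI impI)
      show "bij_betw rg L3 L3" using inj img by (simp add: bij_betw_def)
      fix x y assume x: "x \<in> L3" and y: "y \<in> L3"
      have xy: "x + y \<in> L3" "x * y \<in> L3" using x y subfieldD(3,4)[OF sL3] by auto
      have xyN: "x \<in> N" "y \<in> N" using x y L3N by auto
      show "rg (x + y) = rg x + rg y" using x y g xy xyN by (simp add: rg_def g_add)
      show "rg (x * y) = rg x * rg y" using x y g xy xyN by (simp add: rg_def g_mul)
    next
      fix x assume "x \<in> K" then show "rg x = x" using g KsL LL3 by (auto simp: rg_def g_K)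
    next
      fix x assume "x \<notin> L3" then show "rg x = x" by (simp add: rg_def)
    qed
    then have "rg x = x" using fx by (simp add: Gal_carrier)
    then show "g x = x" using x by (simp add: rg_def)
  qed
next
  fix x assume x: "x \<in> K"
  then show "x \<in> {x \<in> L3. \<forall>s\<in>carrier (Gal L3 K). s x = x}"
    using KsL LL3 by (auto simp: Gal_carrier rel_autD(4))
qed

lemma L3_eq: "L3 = N"
  using N L3_galois sL3 L3N L1M L1L2 L2L3 unfolding galois_closure_def by blast

lemma agree:
  assumes g: "g \<in> carrier G" and h: "h \<in> carrier G"
    and eL: "\<And>x. x \<in> L \<Longrightarrow> g x = h x" and ea: "\<And>k. k < 3 \<Longrightarrow> g (alk k) = h (alk k)"
  shows "g = h"
proof
  fix x
  have h1: "y \<in> L1 \<Longrightarrow> g y = h y" for y by (rule adj_agree[OF g h LsN alk_N eL ea]) simp_all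
  have h2: "y \<in> L2 \<Longrightarrow> g y = h y" for y by (rule adj_agree[OF g h L1N alk_N h1 ea]) simp_all
  have h3: "y \<in> L3 \<Longrightarrow> g y = h y" for y by (rule adj_agree[OF g h L2N alk_N h2 ea]) simp_all
  show "g x = h x"
  proof (cases "x \<in> N")
    case True then show ?thesis using h3 L3_eq by blast
  next
    case False then show ?thesis using g_out[OF g] g_out[OF h] by simp
  qed
qed

end

lemma char2_sq_sum:
  assumes c2: "(2::'a::field) = 0" and T: "finite T"
  shows "(\<Sum>i\<in>T. (x i :: 'a)) ^ 2 = (\<Sum>i\<in>T. x i ^ 2)"
  using T
proof (induction T rule: finite_induct)
  case (insert j F)
  have "(x j + sum x F) ^ 2 = x j ^ 2 + (sum x F) ^ 2 + 2 * x j * sum x F"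
    by (simp add: power2_eq_square algebra_simps)
  then show ?case using insert c2 by simp
qed simp

lemma char2_parity:
  assumes c2: "(2::'a::field) = 0" and T: "finite T"
  shows "(\<Sum>i\<in>T. (if b i then 1 else 0 :: 'a)) = (if odd (card {i\<in>T. b i}) then 1 else 0)"
  using T
proof (induction T rule: finite_induct)
  case (insert j F)
  have fin: "finite {i \<in> F. b i}" using insert by simp
  have c: "card {i \<in> insert j F. b i} = card {i \<in> F. b i} + (if b j then 1 else 0)"
  proof (cases "b j")
    case True
    then have "{i \<in> insert j F. b i} = insert j {i \<in> F. b i}" by auto
    then show ?thesis using True fin insert(2) by simp
  next
    case False
    then have "{i \<in> insert j F. b i} = {i \<in> F. b i}" by auto
    then show ?thesis using False by simp
  qed
  have one: "(1::'a) + 1 = 0" using c2 by simp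
  show ?case using insert(1,2,3) c one by (auto simp: add.commute)
qed simp

context setting begin

definition H0 where "H0 = {g \<in> carrier G. \<forall>x\<in>L. g x = x}"

definition eps :: "('a \<Rightarrow> 'a) \<Rightarrow> nat \<Rightarrow> bool" where "eps r k = (r (alk k) \<noteq> alk k)"

abbreviation ind :: "bool \<Rightarrow> 'a" where "ind b \<equiv> (if b then 1 else 0)"

lemma H0_G: "r \<in> H0 \<Longrightarrow> r \<in> carrier G" and H0_L: "r \<in> H0 \<Longrightarrow> x \<in> L \<Longrightarrow> r x = x"
  by (auto simp: H0_def)

lemma H0_acts: "r \<in> H0 \<Longrightarrow> acts r 0" by (simp add: H0_def acts_def)

lemma one_ne: "(1::'a) + 1 = 0" using char2 by simp

lemma rho_alk: assumes r: "r \<in> H0" and k: "k < 3" shows "r (alk k) = alk k + ind (eps r k)"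
  using g_alk[OF H0_G[OF r] H0_acts[OF r], of k] k by (auto simp: eps_def)

lemma H0_comp: assumes r: "r \<in> H0" and s: "s \<in> H0"
  shows "r \<circ> s \<in> H0" and "k < 3 \<Longrightarrow> eps (r \<circ> s) k = (eps r k \<noteq> eps s k)"
proof -
  show "r \<circ> s \<in> H0" using r s Gcomp[OF H0_G[OF r] H0_G[OF s]] by (simp add: H0_def)
  assume k: "k < 3"
  have iL: "ind b \<in> L" for b using L0 L1 by simp
  have "(r \<circ> s) (alk k) = r (alk k + ind (eps s k))" using rho_alk[OF s k] by simp
  also have "\<dots> = alk k + ind (eps r k) + ind (eps s k)"
    using g_add[OF H0_G[OF r] alk_N LN[OF iL]] H0_L[OF r iL] rho_alk[OF r k] by simp
  also have "\<dots> = alk k + ind (eps r k \<noteq> eps s k)" using one_ne by auto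
  finally show "eps (r \<circ> s) k = (eps r k \<noteq> eps s k)" by (simp add: eps_def)
qed

lemma H0_eq: assumes r: "r \<in> H0" and s: "s \<in> H0" and e: "\<And>k. k < 3 \<Longrightarrow> eps r k = eps s k"
  shows "r = s"
  by (rule agree[OF H0_G[OF r] H0_G[OF s]]) (simp_all add: H0_L[OF r] H0_L[OF s] rho_alk[OF r] rho_alk[OF s] e)

lemma id_H0: "id \<in> H0" using Gid by (simp add: H0_def)
lemma eps_id: "eps id k = False" by (simp add: eps_def)

lemma same_act:
  assumes g1: "g1 \<in> carrier G" and g2: "g2 \<in> carrier G" and eL: "\<And>x. x \<in> L \<Longrightarrow> g1 x = g2 x"
    and f: "f \<in> N" and ff: "\<And>r. r \<in> H0 \<Longrightarrow> r f = f"
  shows "g1 f = g2 f"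
proof -
  define h where "h = ainv N g2 \<circ> g1"
  have hG: "h \<in> carrier G" unfolding h_def by (rule Gcomp[OF Gainv[OF g2] g1])
  have "h \<in> H0" using hG eL Gainv_l[OF g2] by (simp add: H0_def h_def)
  then have "h f = f" by (rule ff)
  then have "ainv N g2 (g1 f) = f" by (simp add: h_def)
  then have "g2 (ainv N g2 (g1 f)) = g2 f" by simp
  then show ?thesis using Gainv_r[OF g2 g_in[OF g1 f]] by simp
qed

lemma shift_act:
  assumes g: "g \<in> carrier G" and j: "acts g j" and u: "u \<in> N" and uf: "\<And>r. r \<in> H0 \<Longrightarrow> r u = u"
  shows "g ((tau ^^ k) u) = (tau ^^ ((j + k) mod 3)) u"
proof -
  have eL: "(g \<circ> tau ^^ k) x = (tau ^^ ((j + k) mod 3)) x" if x: "x \<in> L" for x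
  proof -
    have "(g \<circ> tau ^^ k) x = (\<sigma> ^^ (j + k)) x" using acts_comp[OF j acts_pow[OF tau] Gpow[OF tau(1)]] x
      by (simp add: acts_def)
    also have "\<dots> = (\<sigma> ^^ ((j + k) mod 3)) x" using sigk by metis
    also have "\<dots> = (tau ^^ ((j + k) mod 3)) x" using acts_pow[OF tau] x by (simp add: acts_def)
    finally show "(g \<circ> tau ^^ k) x = (tau ^^ ((j + k) mod 3)) x" .
  qed
  have "(g \<circ> tau ^^ k) u = (tau ^^ ((j + k) mod 3)) u"
    by (rule same_act[OF Gcomp[OF g Gpow[OF tau(1)]] Gpow[OF tau(1)] eL u]) (auto intro: uf)
  then show ?thesis by simp
qed

lemma Fix_H0:
  assumes f: "f \<in> N" and ff: "\<And>r. r \<in> H0 \<Longrightarrow> r f = f"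
  shows "f \<in> L"
proof -
  obtain x0 where x0: "x0 \<in> L" "\<sigma> x0 \<noteq> x0" using x0_ex by blast
  define y where "y = \<sigma> x0"
  define z where "z = \<sigma> y"
  have yL: "y \<in> L" and zL: "z \<in> L" using x0 by (simp_all add: y_def z_def sL_in)
  have xy: "x0 - y \<noteq> 0" using x0 by (simp add: y_def)
  have xz: "x0 - z \<noteq> 0"
  proof
    assume "x0 - z = 0"
    then have "\<sigma> x0 = \<sigma> z" by simp
    also have "\<sigma> z = x0" by (simp add: z_def y_def s3)
    finally show False using x0 by simp
  qed
  define T where "T = (\<lambda>l. l * f + (tau ^^ 1) (l * f) + (tau ^^ 2) (l * f))"
  have TK: "T l \<in> K" if l: "l \<in> L" for l
  proof -
    define u where "u = l * f"
    have u: "u \<in> N" using l f by (simp add: u_def LN closN)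
    have uf: "r u = u" if r: "r \<in> H0" for r
      using g_mul[OF H0_G[OF r] LN[OF l] f] H0_L[OF r l] ff[OF r] by (simp add: u_def)
    have Tu: "T l = (tau ^^ 0) u + (tau ^^ 1) u + (tau ^^ 2) u" by (simp add: T_def u_def)
    have TN: "T l \<in> N" unfolding Tu using u by (simp add: closN g_in[OF Gpow[OF tau(1)]] del: funpow.simps)
    show ?thesis
    proof (rule fixG[OF TN])
      fix g assume g: "g \<in> carrier G"
      obtain j where j: "j < 3" "acts g j" using acts_ex[OF g] by blast
      have "g (T l) = g ((tau ^^ 0) u) + g ((tau ^^ 1) u) + g ((tau ^^ 2) u)"
        unfolding Tu using u g by (simp add: g_add closN g_in[OF Gpow[OF tau(1)]] del: funpow.simps)
      also have "\<dots> = (tau ^^ ((j + 0) mod 3)) u + (tau ^^ ((j + 1) mod 3)) u + (tau ^^ ((j + 2) mod 3)) u"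
      proof -
        have sh: "g ((tau ^^ k) u) = (tau ^^ ((j + k) mod 3)) u" for k
          by (rule shift_act[OF g j(2) u]) (rule uf)
        show ?thesis by (simp only: sh)
      qed
      also have "\<dots> = T l"
      proof -
        have "j = 0 \<or> j = 1 \<or> j = 2" using j(1) by auto
        then show ?thesis unfolding Tu by (elim disjE) (simp_all add: algebra_simps numeral_2_eq_2 del: funpow.simps)
      qed
      finally show "g (T l) = T l" .
    qed
  qed
  have tk: "(tau ^^ k) (l * f) = (\<sigma> ^^ k) l * (tau ^^ k) f" if l: "l \<in> L" for l k
    using g_mul[OF Gpow[OF tau(1)] LN[OF l] f] acts_pow[OF tau, of k] l by (simp add: acts_def)
  define F1 where "F1 = (tau ^^ 1) f"
  define F2 where "F2 = (tau ^^ 2) f"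
  have s1: "(\<sigma> ^^ 1) x0 = y" and s2: "(\<sigma> ^^ 2) x0 = z" by (simp_all add: y_def z_def numeral_2_eq_2)
  have t0: "T 1 = f + F1 + F2" using tk[OF L1] by (simp add: T_def F1_def F2_def rel_aut_1[OF sL sigpow_aut])
  have t1: "T x0 = x0 * f + y * F1 + z * F2" unfolding T_def F1_def F2_def tk[OF x0(1)] s1 s2 by simp
  have t2: "T (x0 ^ 2) = x0 ^ 2 * f + y ^ 2 * F1 + z ^ 2 * F2"
    unfolding T_def F1_def F2_def tk[OF Lpow[OF x0(1)]] sk_pow[OF x0(1)] s1 s2 by simp
  have key: "T (x0 ^ 2) - (y + z) * T x0 + y * z * T 1 = (x0 - y) * (x0 - z) * f"
    unfolding t0 t1 t2 by (simp add: algebra_simps power2_eq_square)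
  have "f = (T (x0 ^ 2) - (y + z) * T x0 + y * z * T 1) / ((x0 - y) * (x0 - z))"
  proof -
    have D: "(x0 - y) * (x0 - z) \<noteq> 0" using xy xz by simp
    have "f * ((x0 - y) * (x0 - z)) = T (x0 ^ 2) - (y + z) * T x0 + y * z * T 1"
      using key by (simp only: mult.commute)
    then show ?thesis using D by (simp add: eq_divide_eq)
  qed
  moreover have "T (x0 ^ 2) \<in> L" "T x0 \<in> L" "T 1 \<in> L"
    using TK[OF Lpow[OF x0(1)]] TK[OF x0(1)] TK[OF L1] KsL by auto
  ultimately show "f \<in> L" using yL zL x0(1) by (simp add: closL subfield_div[OF sL])
qed

end

lemma sat_cl:
  fixes P :: "bool \<Rightarrow> bool \<Rightarrow> bool \<Rightarrow> bool"
  assumes cl: "\<And>a b c a' b' c'. P a b c \<Longrightarrow> P a' b' c' \<Longrightarrow> P (a\<noteq>a') (b\<noteq>b') (c\<noteq>c')"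
  shows "(P False False True \<longrightarrow> P False True False \<longrightarrow> P False True True) \<and>
    (P False False True \<longrightarrow> P False True True \<longrightarrow> P False True False) \<and>
    (P False False True \<longrightarrow> P True False False \<longrightarrow> P True False True) \<and>
    (P False False True \<longrightarrow> P True False True \<longrightarrow> P True False False) \<and>
    (P False False True \<longrightarrow> P True True False \<longrightarrow> P True True True) \<and>
    (P False False True \<longrightarrow> P True True True \<longrightarrow> P True True False) \<and>
    (P False True False \<longrightarrow> P False True True \<longrightarrow> P False False True) \<and>
    (P False True False \<longrightarrow> P True False False \<longrightarrow> P True True False) \<and>
    (P False True False \<longrightarrow> P True False True \<longrightarrow> P True True True) \<and>
    (P False True False \<longrightarrow> P True True False \<longrightarrow> P True False False) \<and>
    (P False True False \<longrightarrow> P True True True \<longrightarrow> P True False True) \<and>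
    (P False True True \<longrightarrow> P True False False \<longrightarrow> P True True True) \<and>
    (P False True True \<longrightarrow> P True False True \<longrightarrow> P True True False) \<and>
    (P False True True \<longrightarrow> P True True False \<longrightarrow> P True False True) \<and>
    (P False True True \<longrightarrow> P True True True \<longrightarrow> P True False False) \<and>
    (P True False False \<longrightarrow> P True False True \<longrightarrow> P False False True) \<and>
    (P True False False \<longrightarrow> P True True False \<longrightarrow> P False True False) \<and>
    (P True False False \<longrightarrow> P True True True \<longrightarrow> P False True True) \<and>
    (P True False True \<longrightarrow> P True True False \<longrightarrow> P False True True) \<and>
    (P True False True \<longrightarrow> P True True True \<longrightarrow> P False True False) \<and>
    (P True True False \<longrightarrow> P True True True \<longrightarrow> P False False True)"
  by (intro conjI impI; drule (1) cl; simp)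

lemma sat_C:
  fixes P :: "bool \<Rightarrow> bool \<Rightarrow> bool \<Rightarrow> bool"
  assumes cl: "\<And>a b c a' b' c'. P a b c \<Longrightarrow> P a' b' c' \<Longrightarrow> P (a\<noteq>a') (b\<noteq>b') (c\<noteq>c')"
    and w001: "\<exists>a b c. P a b c \<and> c"
    and w010: "\<exists>a b c. P a b c \<and> b"
    and w011: "\<exists>a b c. P a b c \<and> (b \<noteq> c)"
    and w100: "\<exists>a b c. P a b c \<and> a"
    and w101: "\<exists>a b c. P a b c \<and> (a \<noteq> c)"
    and w110: "\<exists>a b c. P a b c \<and> (a \<noteq> b)"
    and w111: "\<exists>a b c. P a b c \<and> ((a \<noteq> b) \<noteq> c)"
    and z: "P False False False"
  shows "P x y z"
proof -
  have C: "(P False False True \<longrightarrow> P False True False \<longrightarrow> P False True True) \<and>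
    (P False False True \<longrightarrow> P False True True \<longrightarrow> P False True False) \<and>
    (P False False True \<longrightarrow> P True False False \<longrightarrow> P True False True) \<and>
    (P False False True \<longrightarrow> P True False True \<longrightarrow> P True False False) \<and>
    (P False False True \<longrightarrow> P True True False \<longrightarrow> P True True True) \<and>
    (P False False True \<longrightarrow> P True True True \<longrightarrow> P True True False) \<and>
    (P False True False \<longrightarrow> P False True True \<longrightarrow> P False False True) \<and>
    (P False True False \<longrightarrow> P True False False \<longrightarrow> P True True False) \<and>
    (P False True False \<longrightarrow> P True False True \<longrightarrow> P True True True) \<and>
    (P False True False \<longrightarrow> P True True False \<longrightarrow> P True False False) \<and>
    (P False True False \<longrightarrow> P True True True \<longrightarrow> P True False True) \<and>
    (P False True True \<longrightarrow> P True False False \<longrightarrow> P True True True) \<and>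
    (P False True True \<longrightarrow> P True False True \<longrightarrow> P True True False) \<and>
    (P False True True \<longrightarrow> P True True False \<longrightarrow> P True False True) \<and>
    (P False True True \<longrightarrow> P True True True \<longrightarrow> P True False False) \<and>
    (P True False False \<longrightarrow> P True False True \<longrightarrow> P False False True) \<and>
    (P True False False \<longrightarrow> P True True False \<longrightarrow> P False True False) \<and>
    (P True False False \<longrightarrow> P True True True \<longrightarrow> P False True True) \<and>
    (P True False True \<longrightarrow> P True True False \<longrightarrow> P False True True) \<and>
    (P True False True \<longrightarrow> P True True True \<longrightarrow> P False True False) \<and>
    (P True True False \<longrightarrow> P True True True \<longrightarrow> P False False True)" by (rule sat_cl[of P, OF cl])
  have v001: "P False False True \<or> P False True True \<or> P True False True \<or> P True True True"
    using w001 by clarify (case_tac a; case_tac b; case_tac c; simp_all)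
  have v010: "P False True False \<or> P False True True \<or> P True True False \<or> P True True True"
    using w010 by clarify (case_tac a; case_tac b; case_tac c; simp_all)
  have v011: "P False False True \<or> P False True False \<or> P True False True \<or> P True True False"
    using w011 by clarify (case_tac a; case_tac b; case_tac c; simp_all)
  have v100: "P True False False \<or> P True False True \<or> P True True False \<or> P True True True"
    using w100 by clarify (case_tac a; case_tac b; case_tac c; simp_all)
  have v101: "P False False True \<or> P False True True \<or> P True False False \<or> P True True False"
    using w101 by clarify (case_tac a; case_tac b; case_tac c; simp_all)
  have v110: "P False True False \<or> P False True True \<or> P True False False \<or> P True False True"
    using w110 by clarify (case_tac a; case_tac b; case_tac c; simp_all)
  have v111: "P False False True \<or> P False True False \<or> P True False False \<or> P True True True"
    using w111 by clarify (case_tac a; case_tac b; case_tac c; simp_all)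
  have all: "P False False True \<and> P False True False \<and> P False True True \<and> P True False False \<and> P True False True \<and> P True True False \<and> P True True True" using C v001 v010 v011 v100 v101 v110 v111 by sat
  show ?thesis using all z by (cases x; cases y; cases z) simp_all
qed

lemma sat_B:
  fixes P :: "bool \<Rightarrow> bool \<Rightarrow> bool \<Rightarrow> bool"
  assumes cl: "\<And>a b c a' b' c'. P a b c \<Longrightarrow> P a' b' c' \<Longrightarrow> P (a\<noteq>a') (b\<noteq>b') (c\<noteq>c')"
    and ev: "\<And>a b c. P a b c \<Longrightarrow> c = (a \<noteq> b)"
    and w100: "\<exists>a b c. P a b c \<and> a" and w010: "\<exists>a b c. P a b c \<and> b" and w001: "\<exists>a b c. P a b c \<and> c"
  shows "P True True False \<and> P True False True \<and> P False True True"
proof -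
  have C: "(P False False True \<longrightarrow> P False True False \<longrightarrow> P False True True) \<and>
    (P False False True \<longrightarrow> P False True True \<longrightarrow> P False True False) \<and>
    (P False False True \<longrightarrow> P True False False \<longrightarrow> P True False True) \<and>
    (P False False True \<longrightarrow> P True False True \<longrightarrow> P True False False) \<and>
    (P False False True \<longrightarrow> P True True False \<longrightarrow> P True True True) \<and>
    (P False False True \<longrightarrow> P True True True \<longrightarrow> P True True False) \<and>
    (P False True False \<longrightarrow> P False True True \<longrightarrow> P False False True) \<and>
    (P False True False \<longrightarrow> P True False False \<longrightarrow> P True True False) \<and>
    (P False True False \<longrightarrow> P True False True \<longrightarrow> P True True True) \<and>
    (P False True False \<longrightarrow> P True True False \<longrightarrow> P True False False) \<and>
    (P False True False \<longrightarrow> P True True True \<longrightarrow> P True False True) \<and>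
    (P False True True \<longrightarrow> P True False False \<longrightarrow> P True True True) \<and>
    (P False True True \<longrightarrow> P True False True \<longrightarrow> P True True False) \<and>
    (P False True True \<longrightarrow> P True True False \<longrightarrow> P True False True) \<and>
    (P False True True \<longrightarrow> P True True True \<longrightarrow> P True False False) \<and>
    (P True False False \<longrightarrow> P True False True \<longrightarrow> P False False True) \<and>
    (P True False False \<longrightarrow> P True True False \<longrightarrow> P False True False) \<and>
    (P True False False \<longrightarrow> P True True True \<longrightarrow> P False True True) \<and>
    (P True False True \<longrightarrow> P True True False \<longrightarrow> P False True True) \<and>
    (P True False True \<longrightarrow> P True True True \<longrightarrow> P False True False) \<and>
    (P True True False \<longrightarrow> P True True True \<longrightarrow> P False False True)" by (rule sat_cl[of P, OF cl])
  have v100: "P True False True \<or> P True True False"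
    using w100 by clarify (case_tac a; case_tac b; case_tac c; auto dest: ev)
  have v010: "P False True True \<or> P True True False"
    using w010 by clarify (case_tac a; case_tac b; case_tac c; auto dest: ev)
  have v001: "P False True True \<or> P True False True"
    using w001 by clarify (case_tac a; case_tac b; case_tac c; auto dest: ev)
  show ?thesis using C v100 v010 v001 by sat
qed


lemma Collect_insert_filter: "{i \<in> insert x A. P i} = (if P x then insert x {i \<in> A. P i} else {i \<in> A. P i})"
  by auto

context setting begin

definition sal :: "nat set \<Rightarrow> 'a" where "sal T = (\<Sum>i\<in>T. alk i)"
definition saa :: "nat set \<Rightarrow> 'a" where "saa T = (\<Sum>i\<in>T. (\<sigma> ^^ i) a)"
definition R :: "nat set \<Rightarrow> bool" where "R T \<longleftrightarrow> saa T \<in> AS_sub L"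
definition oddc :: "('a \<Rightarrow> 'a) \<Rightarrow> nat set \<Rightarrow> bool" where "oddc r T \<longleftrightarrow> odd (card {i\<in>T. eps r i})"

lemma sal_N: "sal T \<in> N" unfolding sal_def by (rule subfield_sum[OF sN alk_N])

lemma sal_eq: assumes T: "finite T" shows "sal T ^ 2 - sal T = saa T"
proof -
  have "sal T ^ 2 - sal T = (\<Sum>i\<in>T. alk i ^ 2) - (\<Sum>i\<in>T. alk i)"
    unfolding sal_def using char2_sq_sum[OF char2 T] by simp
  also have "\<dots> = (\<Sum>i\<in>T. alk i ^ 2 - alk i)" by (simp add: sum_subtractf)
  also have "\<dots> = saa T" unfolding saa_def by (simp add: alk_eq)
  finally show ?thesis .
qed

lemma rho_sal: assumes r: "r \<in> H0" and T: "T \<subseteq> {..<3}"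
  shows "r (sal T) = sal T + ind (oddc r T)"
proof -
  have fT: "finite T" using T finite_subset by blast
  have "r (sal T) = (\<Sum>i\<in>T. r (alk i))"
    unfolding sal_def by (rule rel_aut_sum[OF sN GD[OF H0_G[OF r]]]) (rule alk_N)
  also have "\<dots> = (\<Sum>i\<in>T. alk i + ind (eps r i))"
    by (rule sum.cong[OF refl]) (use T rho_alk[OF r] in auto)
  also have "\<dots> = sal T + (\<Sum>i\<in>T. ind (eps r i))" by (simp add: sum.distrib sal_def)
  also have "\<dots> = sal T + ind (oddc r T)" using char2_parity[OF char2 fT, of "eps r"] by (simp add: oddc_def)
  finally show ?thesis .
qed

lemma rel_even: assumes T: "T \<subseteq> {..<3}" and RT: "R T" and r: "r \<in> H0" shows "\<not> oddc r T"
proof -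
  have fT: "finite T" using T finite_subset by blast
  obtain y where y: "y \<in> L" "saa T = y ^ 2 - y" using RT by (auto simp: R_def AS_sub_def)
  have "sal T \<in> L" using AS_L[OF y(1)] sal_eq[OF fT] y(2) by simp
  then have "r (sal T) = sal T" using H0_L[OF r] by simp
  then have "ind (oddc r T) = (0::'a)" using rho_sal[OF r T] by simp
  then show ?thesis by (auto split: if_splits)
qed

lemma nonrel_odd: assumes T: "T \<subseteq> {..<3}" and RT: "\<not> R T" shows "\<exists>r\<in>H0. oddc r T"
proof (rule ccontr)
  assume "\<not> ?thesis"
  then have "\<And>r. r \<in> H0 \<Longrightarrow> r (sal T) = sal T" using rho_sal[OF _ T] by auto
  then have "sal T \<in> L" using Fix_H0[OF sal_N] by blast
  moreover have fT: "finite T" using T finite_subset by blast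
  moreover have "saa T = sal T ^ 2 - sal T" using sal_eq[OF fT] by simp
  ultimately have "saa T \<in> AS_sub L" unfolding AS_sub_def by blast
  then show False using RT by (simp add: R_def)
qed

lemma AS_sig: assumes x: "x \<in> AS_sub L" shows "\<sigma> x \<in> AS_sub L"
proof -
  obtain y where y: "y \<in> L" "x = y ^ 2 - y" using x by (auto simp: AS_sub_def)
  have "\<sigma> x = (\<sigma> y) ^ 2 - \<sigma> y" using y by (simp add: s_diff s_pow closL)
  then show ?thesis using sL_in[OF y(1)] by (auto simp: AS_sub_def)
qed

lemma AS_add: assumes x: "x \<in> AS_sub L" and v: "v \<in> AS_sub L" shows "x + v \<in> AS_sub L"
proof -
  obtain y where y: "y \<in> L" "x = y ^ 2 - y" using x by (auto simp: AS_sub_def)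
  obtain w where w: "w \<in> L" "v = w ^ 2 - w" using v by (auto simp: AS_sub_def)
  have "x + v = (y + w) ^ 2 - (y + w) - 2 * y * w"
    by (simp add: y(2) w(2) power2_eq_square algebra_simps)
  then have "x + v = (y + w) ^ 2 - (y + w)" using char2 by simp
  then show ?thesis using y(1) w(1) by (auto simp: AS_sub_def closL)
qed

lemma s2: "(\<sigma> ^^ 2) x = \<sigma> (\<sigma> x)" by (simp add: numeral_2_eq_2)

lemma saa_vals: "saa {0} = a" "saa {1} = \<sigma> a" "saa {2} = \<sigma> (\<sigma> a)"
  "saa {0, 1} = a + \<sigma> a" "saa {1, 2} = \<sigma> a + \<sigma> (\<sigma> a)" "saa {0, 2} = a + \<sigma> (\<sigma> a)"
  "saa {0, 1, 2} = a + \<sigma> a + \<sigma> (\<sigma> a)"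
  by (simp_all add: saa_def s2 add.assoc)

lemma sa_in: "\<sigma> a \<in> L" "\<sigma> (\<sigma> a) \<in> L" using aL by (simp_all add: sL_in)

lemma nR0: "\<not> R {0}" using a_notAS by (simp add: R_def saa_vals)
lemma nR1: "\<not> R {1}"
proof
  assume "R {1}"
  then have h: "\<sigma> a \<in> AS_sub L" unfolding R_def saa_vals .
  have "\<sigma> (\<sigma> (\<sigma> a)) \<in> AS_sub L" using AS_sig[OF AS_sig[OF h]] .
  then show False using nR0 unfolding R_def saa_vals s3 by simp
qed
lemma nR2: "\<not> R {2}"
proof
  assume "R {2}"
  then have h: "\<sigma> (\<sigma> a) \<in> AS_sub L" unfolding R_def saa_vals .
  have "\<sigma> (\<sigma> (\<sigma> a)) \<in> AS_sub L" using AS_sig[OF h] .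
  then show False using nR0 unfolding R_def saa_vals s3 by simp
qed

lemma R01_12: "R {0, 1} \<Longrightarrow> R {1, 2}"
  unfolding R_def saa_vals using AS_sig[of "a + \<sigma> a"] by (simp add: s_add aL sa_in)
lemma R12_02: "R {1, 2} \<Longrightarrow> R {0, 2}"
  unfolding R_def saa_vals using AS_sig[of "\<sigma> a + \<sigma> (\<sigma> a)"] by (simp add: s_add aL sa_in s3 add.commute)
lemma R02_01: "R {0, 2} \<Longrightarrow> R {0, 1}"
  unfolding R_def saa_vals using AS_sig[of "a + \<sigma> (\<sigma> a)"] by (simp add: s_add aL sa_in s3 add.commute)
lemma R012: "R {0, 1} \<Longrightarrow> R {0, 1, 2} \<Longrightarrow> False"
proof -
  assume A: "R {0, 1}" and B: "R {0, 1, 2}"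
  have "(a + \<sigma> a + \<sigma> (\<sigma> a)) + (a + \<sigma> a) \<in> AS_sub L"
    using AS_add[OF B[unfolded R_def saa_vals] A[unfolded R_def saa_vals]] .
  moreover have "(a + \<sigma> a + \<sigma> (\<sigma> a)) + (a + \<sigma> a) = \<sigma> (\<sigma> a)"
  proof -
    have "(a + \<sigma> a + \<sigma> (\<sigma> a)) + (a + \<sigma> a) = (a + a) + (\<sigma> a + \<sigma> a) + \<sigma> (\<sigma> a)" by (simp add: algebra_simps)
    then show ?thesis by (simp only: char2_add_self[OF char2] add_0)
  qed
  ultimately show False using nR2 unfolding R_def saa_vals by simp
qed

lemma oddc_vals: "oddc r {0} = eps r 0" "oddc r {1} = eps r 1" "oddc r {2} = eps r 2"
  "oddc r {0, 1} = (eps r 0 \<noteq> eps r 1)" "oddc r {1, 2} = (eps r 1 \<noteq> eps r 2)"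
  "oddc r {0, 2} = (eps r 0 \<noteq> eps r 2)" "oddc r {0, 1, 2} = ((eps r 0 \<noteq> eps r 1) \<noteq> eps r 2)"
  unfolding oddc_def Collect_insert_filter
  by (cases "eps r 0"; cases "eps r 1"; cases "eps r 2"; simp)+

end

context setting begin

lemma H0_sq: assumes r: "r \<in> H0" shows "r \<circ> r = id"
  by (rule H0_eq[OF H0_comp(1)[OF r r] id_H0]) (simp add: H0_comp(2)[OF r r] eps_id)

lemma H0_sub: "H0 \<subseteq> carrier G" by (auto simp: H0_def)

lemma H0_inv: assumes r: "r \<in> H0" shows "inv\<^bsub>G\<^esub> r = r"
  using group.inv_equality[OF grpG, of r r] H0_sq[OF r] H0_G[OF r] by simp

lemma subH0: "subgroup H0 G"
proof (rule group.subgroupI[OF grpG H0_sub])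
  show "H0 \<noteq> {}" using id_H0 by blast
  fix r s assume r: "r \<in> H0"
  then show "inv\<^bsub>G\<^esub> r \<in> H0" using H0_inv by simp
  assume s: "s \<in> H0"
  then show "r \<otimes>\<^bsub>G\<^esub> s \<in> H0" using H0_comp(1)[OF r s] by simp
qed

lemma normH0: "H0 \<lhd> G"
  unfolding group.normal_inv_iff[OF grpG]
proof (intro conjI subH0 ballI)
  fix x h assume x: "x \<in> carrier G" and h: "h \<in> H0"
  define y where "y = inv\<^bsub>G\<^esub> x"
  have y: "y \<in> carrier G" using x by (simp add: y_def group.inv_closed[OF grpG])
  have xy: "x \<circ> y = id" using group.r_inv[OF grpG x] by (simp add: y_def)
  have "x \<otimes>\<^bsub>G\<^esub> h \<otimes>\<^bsub>G\<^esub> y = x \<circ> h \<circ> y" by simp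
  moreover have "x \<circ> h \<circ> y \<in> carrier G" using Gcomp[OF Gcomp[OF x H0_G[OF h]] y] .
  moreover have "(x \<circ> h \<circ> y) l = l" if l: "l \<in> L" for l
  proof -
    have "(x \<circ> h \<circ> y) l = x (y l)" using H0_L[OF h gL[OF y l]] by simp
    also have "\<dots> = l" using xy by (simp add: fun_eq_iff)
    finally show ?thesis .
  qed
  ultimately show "x \<otimes>\<^bsub>G\<^esub> h \<otimes>\<^bsub>G\<^esub> inv\<^bsub>G\<^esub> x \<in> H0" by (simp add: H0_def y_def)
qed

definition t1 where "t1 = tau ^^ 4"

lemma t1G: "t1 \<in> carrier G" unfolding t1_def by (rule Gpow[OF tau(1)])
lemma t1_acts: "acts t1 1"
  using acts_pow[OF tau, of 4] acts_mod[of t1 4] by (simp add: t1_def)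

lemma tau3_H0: "tau ^^ 3 \<in> H0"
proof -
  have "acts (tau ^^ 3) 0" using acts_pow[OF tau, of 3] acts_mod[of "tau ^^ 3" 3] by simp
  then show ?thesis using Gpow[OF tau(1)] by (simp add: H0_def acts_def)
qed

lemma t1_3: "t1 ^^ 3 = id"
proof -
  have "tau ^^ 6 = id" using H0_sq[OF tau3_H0] by (simp add: funpow_add[symmetric])
  then have "tau ^^ 12 = id" by (metis funpow_add id_comp numeral_Bit0 mult_2)
  moreover have "(tau ^^ 4) ^^ 3 = tau ^^ (4 * 3)" by (rule funpow_mult)
  ultimately show ?thesis by (simp add: t1_def)
qed

definition c where "c k = t1 ^^ k"
lemma cG: "c k \<in> carrier G" unfolding c_def by (rule Gpow[OF t1G])
lemma c_acts: "acts (c k) k" unfolding c_def by (rule acts_pow[OF t1G t1_acts])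
lemma c_mod: "c k = c (k mod 3)" unfolding c_def by (rule funpow3_mod[OF t1_3])
lemma c_add: "c i \<circ> c j = c (i + j)" by (simp add: c_def funpow_add)
lemma c0: "c 0 = id" by (simp add: c_def)

lemma c_inj: "c i = c j \<Longrightarrow> i < 3 \<Longrightarrow> j < 3 \<Longrightarrow> i = j"
  using c_acts[of i] c_acts[of j] acts_uniq by metis

definition CC where "CC = c ` {..<3}"

lemma c_CC: "c k \<in> CC"
  unfolding CC_def using c_mod[of k] by (metis image_eqI lessThan_iff mod_less_divisor zero_less_numeral)

lemma subCC: "subgroup CC G"
proof (rule group.subgroupI[OF grpG])
  show "CC \<subseteq> carrier G" using cG by (auto simp: CC_def)
  show "CC \<noteq> {}" using c_CC by blast
  fix x assume "x \<in> CC"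
  then obtain k where k: "k < 3" "x = c k" by (auto simp: CC_def)
  have "c (3 - k) \<circ> c k = id" using k(1) c_add[of "3 - k" k] c_mod[of 3] c0 by simp
  then have "inv\<^bsub>G\<^esub> x = c (3 - k)" using group.inv_equality[OF grpG, of "c (3 - k)" x] k cG by simp
  then show "inv\<^bsub>G\<^esub> x \<in> CC" using c_CC by simp
  fix y assume "y \<in> CC"
  then obtain j where j: "y = c j" by (auto simp: CC_def)
  show "x \<otimes>\<^bsub>G\<^esub> y \<in> CC" using k j c_add c_CC by simp
qed

lemma H0_CC: "H0 \<inter> CC = {\<one>\<^bsub>G\<^esub>}"
proof (intro equalityI subsetI)
  fix x assume "x \<in> H0 \<inter> CC"
  then obtain k where k: "k < 3" "x = c k" "c k \<in> H0" by (auto simp: CC_def)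
  have "k = 0" using acts_uniq[OF c_acts H0_acts[OF k(3)] k(1)] by simp
  then show "x \<in> {\<one>\<^bsub>G\<^esub>}" using k c0 by simp
next
  fix x assume "x \<in> {\<one>\<^bsub>G\<^esub>}"
  then show "x \<in> H0 \<inter> CC" using id_H0 c_CC[of 0] c0 by simp
qed

lemma H0_CC_prod: "H0 <#>\<^bsub>G\<^esub> CC = carrier G"
proof (intro equalityI subsetI)
  fix x assume "x \<in> H0 <#>\<^bsub>G\<^esub> CC"
  then obtain h y where "h \<in> H0" "y \<in> CC" "x = h \<circ> y" by (auto simp: set_mult_def)
  then show "x \<in> carrier G" using Gcomp H0_G subgroup.mem_carrier[OF subCC] by blast
next
  fix g assume g: "g \<in> carrier G"
  obtain j where j: "j < 3" "acts g j" using acts_ex[OF g] by blast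
  define h where "h = g \<circ> c (3 - j)"
  have hG: "h \<in> carrier G" unfolding h_def using Gcomp[OF g cG] .
  have "acts h (j + (3 - j))" unfolding h_def by (rule acts_comp[OF j(2) c_acts cG])
  then have "acts h 0" using acts_mod[of h "j + (3 - j)"] j(1) by simp
  then have hH: "h \<in> H0" using hG by (simp add: H0_def acts_def)
  have "h \<circ> c j = g" unfolding h_def using c_add[of "3 - j" j] c_mod[of 3] c0 j(1) by (simp add: o_assoc[symmetric])
  then show "g \<in> H0 <#>\<^bsub>G\<^esub> CC" using hH c_CC[of j] by (force simp: set_mult_def)
qed

lemma semi: "semidirect G H0 CC"
  unfolding semidirect_def using normH0 subCC H0_CC H0_CC_prod by blast

lemma CC_iso: "subgroup_generated G CC \<cong> integer_mod_group 3"
proof -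
  have car: "carrier (subgroup_generated G CC) = CC"
    by (rule subgroup.carrier_subgroup_generated_subgroup[OF subCC])
  have car3: "carrier (integer_mod_group 3) = {0..<3}" by (simp add: carrier_integer_mod_group)
  define psi where "psi = (\<lambda>k::int. c (nat k))"
  have "psi \<in> iso (integer_mod_group 3) (subgroup_generated G CC)"
    unfolding iso_def hom_def
  proof (intro CollectI conjI ballI)
    show "psi \<in> carrier (integer_mod_group 3) \<rightarrow> carrier (subgroup_generated G CC)"
      using c_CC by (simp add: car psi_def)
    fix x y assume x: "x \<in> carrier (integer_mod_group 3)" and y: "y \<in> carrier (integer_mod_group 3)"
    then have x0: "0 \<le> x" and y0: "0 \<le> y" by (auto simp: carrier_integer_mod_group)
    have "nat ((x + y) mod 3) = (nat x + nat y) mod 3" using x0 y0 by (simp add: nat_mod_distrib nat_add_distrib)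
    then have "psi (x \<otimes>\<^bsub>integer_mod_group 3\<^esub> y) = c (nat x + nat y)"
      by (simp add: psi_def c_mod[of "nat x + nat y"])
    also have "\<dots> = psi x \<otimes>\<^bsub>subgroup_generated G CC\<^esub> psi y" by (simp add: psi_def c_add)
    finally show "psi (x \<otimes>\<^bsub>integer_mod_group 3\<^esub> y) = psi x \<otimes>\<^bsub>subgroup_generated G CC\<^esub> psi y" .
  next
    show "bij_betw psi (carrier (integer_mod_group 3)) (carrier (subgroup_generated G CC))"
      unfolding car car3 bij_betw_def
    proof
      show "inj_on psi {0..<3}"
      proof (rule inj_onI)
        fix x y assume x: "x \<in> {0..<3}" and y: "y \<in> {0..<3}"
          and e: "psi x = psi y"
        have "nat x < 3" "nat y < 3" "0 \<le> x" "0 \<le> y" using x y by auto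
        then show "x = y" using c_inj[of "nat x" "nat y"] e by (simp add: psi_def)
      qed
      show "psi ` {0..<3} = CC"
      proof (intro equalityI subsetI)
        fix z assume "z \<in> psi ` {0..<3}"
        then show "z \<in> CC" using c_CC by (auto simp: psi_def)
      next
        fix z assume "z \<in> CC"
        then obtain k where k: "k < 3" "z = c k" by (auto simp: CC_def)
        then have "z = psi (int k)" by (simp add: psi_def)
        moreover have "int k \<in> {0..<3}" using k by simp
        ultimately show "z \<in> psi ` {0..<3}" by simp
      qed
    qed
  qed
  then have "integer_mod_group 3 \<cong> subgroup_generated G CC" by (rule is_isoI)
  then show ?thesis using group.iso_sym[OF group_integer_mod_group] by blast
qed

end

lemma sub3:
  assumes "S \<subseteq> {0, 1, 2::nat}"
  shows "S = {} \<or> S = {0} \<or> S = {1} \<or> S = {2} \<or> S = {0, 1} \<or> S = {0, 2} \<or> S = {1, 2} \<or> S = {0, 1, 2}"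
proof -
  have e: "S = (if 0 \<in> S then {0} else {}) \<union> (if 1 \<in> S then {1} else {}) \<union> (if 2 \<in> S then {2} else {})"
    using assms by auto
  have gen: "S = (if p then {0} else {}) \<union> (if q then {1} else {}) \<union> (if r then {2::nat} else {}) \<Longrightarrow>
    S = {} \<or> S = {0} \<or> S = {1} \<or> S = {2} \<or> S = {0, 1} \<or> S = {0, 2} \<or> S = {1, 2} \<or> S = {0, 1, 2}" for p q r
    by (cases p; cases q; cases r) (simp_all add: insert_commute)
  show ?thesis by (rule gen[OF e])
qed

context setting begin

lemma H_iso:
  assumes d3: "d \<le> 3"
    and INJ: "\<And>r s. r \<in> H0 \<Longrightarrow> s \<in> H0 \<Longrightarrow> (\<And>i. i < d \<Longrightarrow> eps r i = eps s i) \<Longrightarrow> r = s"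
    and SURJ: "\<And>b. \<exists>r\<in>H0. \<forall>i<d. eps r i = b i"
  shows "subgroup_generated G H0 \<cong> product_group {..<d} (\<lambda>_. integer_mod_group 2)"
proof -
  define P where "P = product_group {..<d} (\<lambda>_::nat. integer_mod_group 2)"
  define S where "S = subgroup_generated G H0"
  have car: "carrier S = H0" unfolding S_def
    by (rule subgroup.carrier_subgroup_generated_subgroup[OF subH0])
  have carP: "carrier P = (\<Pi>\<^sub>E i\<in>{..<d}. {0..<2})"
    unfolding P_def by (simp add: carrier_integer_mod_group)
  have multS: "x \<otimes>\<^bsub>S\<^esub> y = x \<circ> y" for x y unfolding S_def by simp
  have multP: "f \<otimes>\<^bsub>P\<^esub> g = (\<lambda>i\<in>{..<d}. (f i + g i) mod 2)" for f g unfolding P_def by simp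
  define phi where "phi = (\<lambda>r. \<lambda>i\<in>{..<d}. if eps r i then 1 else (0::int))"
  have hom: "phi \<in> hom S P"
  proof (rule homI)
    fix r assume "r \<in> carrier S"
    show "phi r \<in> carrier P" unfolding carP phi_def by (simp add: PiE_iff)
  next
    fix r s assume r: "r \<in> carrier S" and s: "s \<in> carrier S"
    then have r: "r \<in> H0" and s: "s \<in> H0" unfolding car by auto
    have "phi (r \<circ> s) = (\<lambda>i\<in>{..<d}. (phi r i + phi s i) mod 2)"
    proof (rule ext)
      fix i show "phi (r \<circ> s) i = (\<lambda>i\<in>{..<d}. (phi r i + phi s i) mod 2) i"
      proof (cases "i < d")
        case True
        then have "i < 3" using d3 by simp
        then show ?thesis using True H0_comp(2)[OF r s]
          by (cases "eps r i"; cases "eps s i") (simp_all add: phi_def)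
      qed (simp add: phi_def)
    qed
    then show "phi (r \<otimes>\<^bsub>S\<^esub> s) = phi r \<otimes>\<^bsub>P\<^esub> phi s" by (simp only: multS multP)
  qed
  have inj: "inj_on phi H0"
  proof (rule inj_onI)
    fix r s assume r: "r \<in> H0" and s: "s \<in> H0" and e: "phi r = phi s"
    show "r = s"
    proof (rule INJ[OF r s])
      fix i assume i: "i < d"
      have "phi r i = phi s i" using e by simp
      then have "(if eps r i then 1 else (0::int)) = (if eps s i then 1 else 0)" using i by (simp add: phi_def)
      then show "eps r i = eps s i" by (cases "eps r i"; cases "eps s i") simp_all
    qed
  qed
  have img: "phi ` H0 = (\<Pi>\<^sub>E i\<in>{..<d}. {0..<2})"
  proof (intro equalityI subsetI)
    fix f assume "f \<in> phi ` H0"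
    then obtain r where fr: "f = phi r" by (rule imageE)
    show "f \<in> (\<Pi>\<^sub>E i\<in>{..<d}. {0..<2})" unfolding fr phi_def by (simp add: PiE_iff)
  next
    fix f assume f: "f \<in> (\<Pi>\<^sub>E i\<in>{..<d}. {0..<2::int})"
    from SURJ[of "\<lambda>i. f i = 1"] obtain r where r: "r \<in> H0" "\<forall>i<d. eps r i = (f i = 1)" ..
    have "phi r = f"
    proof (rule ext)
      fix i show "phi r i = f i"
      proof (cases "i < d")
        case True
        then have "f i \<in> {0..<2}" using f by (simp add: PiE_iff)
        then have "0 \<le> f i" "f i < 2" by simp_all
        then have "f i = 0 \<or> f i = 1" by arith
        moreover have "phi r i = (if f i = 1 then 1 else 0)" using True r(2) by (simp add: phi_def)
        ultimately show ?thesis by (elim disjE) simp_all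
      next
        case False
        then have "f i = undefined" by (intro PiE_arb[OF f]) simp
        moreover have "phi r i = undefined" using False by (simp add: phi_def)
        ultimately show ?thesis by simp
      qed
    qed
    then show "f \<in> phi ` H0" using r(1) by (rule image_eqI[OF sym])
  qed
  have "phi \<in> iso S P" unfolding iso_def using hom inj img by (simp add: car carP bij_betw_def)
  then show ?thesis unfolding S_def P_def by (rule is_isoI)
qed

definition PP where "PP x y z \<longleftrightarrow> (\<exists>r\<in>H0. eps r 0 = x \<and> eps r 1 = y \<and> eps r 2 = z)"

lemma PP_cl: assumes "PP x y z" "PP x' y' z'" shows "PP (x \<noteq> x') (y \<noteq> y') (z \<noteq> z')"
proof -
  obtain r where r: "r \<in> H0" "eps r 0 = x" "eps r 1 = y" "eps r 2 = z" using assms(1) unfolding PP_def by blast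
  obtain s where s: "s \<in> H0" "eps s 0 = x'" "eps s 1 = y'" "eps s 2 = z'" using assms(2) unfolding PP_def by blast
  have "r \<circ> s \<in> H0" "eps (r \<circ> s) 0 = (x \<noteq> x')" "eps (r \<circ> s) 1 = (y \<noteq> y')" "eps (r \<circ> s) 2 = (z \<noteq> z')"
    using H0_comp[OF r(1) s(1)] r s by simp_all
  then show ?thesis unfolding PP_def by blast
qed

lemma PP_wit: "r \<in> H0 \<Longrightarrow> Q (eps r 0) (eps r 1) (eps r 2) \<Longrightarrow> \<exists>x y z. PP x y z \<and> Q x y z"
  unfolding PP_def by blast

lemma PP_0: "PP False False False" unfolding PP_def using id_H0 eps_id by blast

lemma PP_odd: assumes "T \<subseteq> {..<3}" "\<not> R T" shows "\<exists>r\<in>H0. oddc r T"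
  using nonrel_odd[OF assms] .

lemma eps3: "r \<in> H0 \<Longrightarrow> s \<in> H0 \<Longrightarrow> eps r 0 = eps s 0 \<Longrightarrow> eps r 1 = eps s 1 \<Longrightarrow> eps r 2 = eps s 2 \<Longrightarrow> r = s"
proof -
  assume "r \<in> H0" "s \<in> H0" "eps r 0 = eps s 0" "eps r 1 = eps s 1" "eps r 2 = eps s 2"
  moreover have "k < 3 \<Longrightarrow> k = 0 \<or> k = 1 \<or> k = 2" for k :: nat by auto
  ultimately show "r = s" using H0_eq[of r s] by blast
qed

lemma indep_char:
  assumes S: "S \<subseteq> {0, 1, 2}"
  shows "AS_indep L (\<lambda>i. (\<sigma> ^^ i) a) S \<longleftrightarrow>
    (\<forall>T\<in>{{0}, {1}, {2}, {0, 1}, {0, 2}, {1, 2}, {0, 1, 2}}. T \<subseteq> S \<longrightarrow> \<not> R T)"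
proof
  assume h: "AS_indep L (\<lambda>i. (\<sigma> ^^ i) a) S"
  show "\<forall>T\<in>{{0}, {1}, {2}, {0, 1}, {0, 2}, {1, 2}, {0, 1, 2}}. T \<subseteq> S \<longrightarrow> \<not> R T"
  proof (intro ballI impI)
    fix T :: "nat set" assume T: "T \<in> {{0}, {1}, {2}, {0, 1}, {0, 2}, {1, 2}, {0, 1, 2}}" and TS: "T \<subseteq> S"
    have "T \<noteq> {}" using T by auto
    then have "(\<Sum>i\<in>T. (\<sigma> ^^ i) a) \<notin> AS_sub L" using h TS unfolding AS_indep_def by blast
    then show "\<not> R T" by (simp add: R_def saa_def)
  qed
next
  assume h: "\<forall>T\<in>{{0}, {1}, {2}, {0, 1}, {0, 2}, {1, 2}, {0, 1, 2}}. T \<subseteq> S \<longrightarrow> \<not> R T"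
  show "AS_indep L (\<lambda>i. (\<sigma> ^^ i) a) S"
    unfolding AS_indep_def
  proof (intro allI impI)
    fix T assume T: "T \<subseteq> S" "T \<noteq> {}"
    have T3: "T \<subseteq> {0, 1, 2}" using S T(1) by blast
    have "T \<in> {{0}, {1}, {2}, {0, 1}, {0, 2}, {1, 2}, {0, 1, 2}}" using sub3[OF T3] T(2) by (elim disjE) simp_all
    then have "\<not> R T" using h T(1) by blast
    then show "(\<Sum>i\<in>T. (\<sigma> ^^ i) a) \<notin> AS_sub L" by (simp add: R_def saa_def)
  qed
qed

lemma rank_eq:
  assumes m: "\<exists>S. S \<subseteq> {0, 1, 2} \<and> AS_indep L (\<lambda>i. (\<sigma> ^^ i) a) S \<and> card S = m"
    and b: "\<And>S. S \<subseteq> {0, 1, 2} \<Longrightarrow> AS_indep L (\<lambda>i. (\<sigma> ^^ i) a) S \<Longrightarrow> card S \<le> m"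
  shows "AS_rank L (\<lambda>i. (\<sigma> ^^ i) a) {0, 1, 2} = m"
  unfolding AS_rank_def
proof (rule Max_eqI)
  show "finite {card S |S. S \<subseteq> {0, 1, 2} \<and> AS_indep L (\<lambda>i. (\<sigma> ^^ i) a) S}"
  proof (rule finite_subset)
    show "{card S |S. S \<subseteq> {0, 1, 2} \<and> AS_indep L (\<lambda>i. (\<sigma> ^^ i) a) S} \<subseteq> card ` Pow {0, 1, 2::nat}"
    proof
      fix x assume "x \<in> {card S |S. S \<subseteq> {0, 1, 2} \<and> AS_indep L (\<lambda>i. (\<sigma> ^^ i) a) S}"
      then obtain S where "x = card S" "S \<subseteq> {0, 1, 2::nat}" by blast
      then show "x \<in> card ` Pow {0, 1, 2::nat}" by blast
    qed
  qed simp
  fix y assume "y \<in> {card S |S. S \<subseteq> {0, 1, 2} \<and> AS_indep L (\<lambda>i. (\<sigma> ^^ i) a) S}"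
  then obtain S where "y = card S" "S \<subseteq> {0, 1, 2}" "AS_indep L (\<lambda>i. (\<sigma> ^^ i) a) S" by blast
  then show "y \<le> m" using b by simp
next
  obtain S where "S \<subseteq> {0, 1, 2}" "AS_indep L (\<lambda>i. (\<sigma> ^^ i) a) S" "card S = m" using m by blast
  then show "m \<in> {card S |S. S \<subseteq> {0, 1, 2} \<and> AS_indep L (\<lambda>i. (\<sigma> ^^ i) a) S}" by blast
qed

lemma R_cases:
  "R {0, 1} \<Longrightarrow> R {1, 2} \<and> R {0, 2} \<and> \<not> R {0, 1, 2}"
  "\<not> R {0, 1} \<Longrightarrow> \<not> R {1, 2} \<and> \<not> R {0, 2}"
  using R01_12 R12_02 R02_01 R012 by blast+

lemma caseA: assumes R01: "R {0, 1}"
  shows "AS_rank L (\<lambda>i. (\<sigma> ^^ i) a) {0, 1, 2} = 1"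
    and "subgroup_generated G H0 \<cong> product_group {..<1::nat} (\<lambda>_. integer_mod_group 2)"
proof -
  have R: "R {1, 2}" "R {0, 2}" "\<not> R {0, 1, 2}" using R_cases(1)[OF R01] by auto
  show "AS_rank L (\<lambda>i. (\<sigma> ^^ i) a) {0, 1, 2} = 1"
  proof (rule rank_eq)
    show "\<exists>S. S \<subseteq> {0, 1, 2} \<and> AS_indep L (\<lambda>i. (\<sigma> ^^ i) a) S \<and> card S = 1"
      by (rule exI[of _ "{0}"]) (simp add: indep_char nR0)
    fix S assume S: "S \<subseteq> {0, 1, 2}" and i: "AS_indep L (\<lambda>i. (\<sigma> ^^ i) a) S"
    have h: "\<forall>T\<in>{{0}, {1}, {2}, {0, 1}, {0, 2}, {1, 2}, {0, 1, 2}}. T \<subseteq> S \<longrightarrow> \<not> R T"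
      using i indep_char[OF S] by blast
    show "card S \<le> 1" using sub3[OF S] h R01 R by (elim disjE) simp_all
  qed
  have eq: "eps r 1 = eps r 0 \<and> eps r 2 = eps r 0" if r: "r \<in> H0" for r
    using rel_even[OF _ R01 r] rel_even[OF _ R(1) r] oddc_vals[of r] by auto
  show "subgroup_generated G H0 \<cong> product_group {..<1::nat} (\<lambda>_. integer_mod_group 2)"
  proof (rule H_iso)
    fix r s assume r: "r \<in> H0" and s: "s \<in> H0" and e: "\<And>i. i < 1 \<Longrightarrow> eps r i = eps s i"
    show "r = s" using eps3[OF r s] eq[OF r] eq[OF s] e[of 0] by simp
  next
    fix b :: "nat \<Rightarrow> bool"
    show "\<exists>r\<in>H0. \<forall>i<1. eps r i = b i"
    proof (cases "b 0")
      case True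
      obtain r where "r \<in> H0" "oddc r {0}" using nonrel_odd[of "{0}"] nR0 by auto
      then show ?thesis using True oddc_vals by auto
    next
      case False then show ?thesis using id_H0 eps_id by auto
    qed
  qed simp
qed

lemma caseB: assumes R01: "\<not> R {0, 1}" and R012: "R {0, 1, 2}"
  shows "AS_rank L (\<lambda>i. (\<sigma> ^^ i) a) {0, 1, 2} = 2"
    and "subgroup_generated G H0 \<cong> product_group {..<2::nat} (\<lambda>_. integer_mod_group 2)"
proof -
  have R: "\<not> R {1, 2}" "\<not> R {0, 2}" using R_cases(2)[OF R01] by auto
  show "AS_rank L (\<lambda>i. (\<sigma> ^^ i) a) {0, 1, 2} = 2"
  proof (rule rank_eq)
    show "\<exists>S. S \<subseteq> {0, 1, 2} \<and> AS_indep L (\<lambda>i. (\<sigma> ^^ i) a) S \<and> card S = 2"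
      by (rule exI[of _ "{0, 1}"]) (simp add: indep_char nR0 nR1 R01 nR1[simplified] R01[simplified] insert_commute)
    fix S assume S: "S \<subseteq> {0, 1, 2}" and i: "AS_indep L (\<lambda>i. (\<sigma> ^^ i) a) S"
    have h: "\<forall>T\<in>{{0}, {1}, {2}, {0, 1}, {0, 2}, {1, 2}, {0, 1, 2}}. T \<subseteq> S \<longrightarrow> \<not> R T"
      using i indep_char[OF S] by blast
    then have "S \<noteq> {0, 1, 2}" using R012 by auto
    then have "S \<subset> {0, 1, 2}" using S by blast
    then have "card S < card {0, 1, 2::nat}" by (rule psubset_card_mono[rotated]) simp
    then show "card S \<le> 2" by simp
  qed
  have ev: "eps r 2 = (eps r 0 \<noteq> eps r 1)" if r: "r \<in> H0" for r
    using rel_even[OF _ R012 r] oddc_vals[of r] by auto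
  show "subgroup_generated G H0 \<cong> product_group {..<2::nat} (\<lambda>_. integer_mod_group 2)"
  proof (rule H_iso)
    fix r s assume r: "r \<in> H0" and s: "s \<in> H0" and e: "\<And>i. i < 2 \<Longrightarrow> eps r i = eps s i"
    show "r = s" using eps3[OF r s] ev[OF r] ev[OF s] e[of 0] e[of 1] by simp
  next
    have w0: "\<exists>x y z. PP x y z \<and> x"
    proof -
      obtain r where "r \<in> H0" "oddc r {0}" using nonrel_odd[of "{0}"] nR0 by auto
      then show ?thesis using oddc_vals[of r] by (intro PP_wit[where Q="\<lambda>x y z. x"]) auto
    qed
    have w1: "\<exists>x y z. PP x y z \<and> y"
    proof -
      obtain r where "r \<in> H0" "oddc r {1}" using nonrel_odd[of "{1}"] nR1 by auto
      then show ?thesis using oddc_vals[of r] by (intro PP_wit[where Q="\<lambda>x y z. y"]) auto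
    qed
    have w2: "\<exists>x y z. PP x y z \<and> z"
    proof -
      obtain r where "r \<in> H0" "oddc r {2}" using nonrel_odd[of "{2}"] nR2 by auto
      then show ?thesis using oddc_vals[of r] by (intro PP_wit[where Q="\<lambda>x y z. z"]) auto
    qed
    have evP: "\<And>x y z. PP x y z \<Longrightarrow> z = (x \<noteq> y)" unfolding PP_def using ev by blast
    have all: "PP True True False \<and> PP True False True \<and> PP False True True"
      by (rule sat_B[of PP, OF PP_cl evP w0 w1 w2])
    fix b :: "nat \<Rightarrow> bool"
    have "PP (b 0) (b 1) (b 0 \<noteq> b 1)" using all PP_0 by (cases "b 0"; cases "b 1") simp_all
    then obtain r where r: "r \<in> H0" "eps r 0 = b 0" "eps r 1 = b 1" unfolding PP_def by blast
    have "\<forall>i<2. eps r i = b i"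
    proof (intro allI impI)
      fix i :: nat assume "i < 2" then have "i = 0 \<or> i = 1" by auto
      then show "eps r i = b i" using r by auto
    qed
    then show "\<exists>r\<in>H0. \<forall>i<2. eps r i = b i" using r(1) by blast
  qed simp
qed

lemma caseC: assumes R01: "\<not> R {0, 1}" and R012: "\<not> R {0, 1, 2}"
  shows "AS_rank L (\<lambda>i. (\<sigma> ^^ i) a) {0, 1, 2} = 3"
    and "subgroup_generated G H0 \<cong> product_group {..<3::nat} (\<lambda>_. integer_mod_group 2)"
proof -
  have R: "\<not> R {1, 2}" "\<not> R {0, 2}" using R_cases(2)[OF R01] by auto
  show "AS_rank L (\<lambda>i. (\<sigma> ^^ i) a) {0, 1, 2} = 3"
  proof (rule rank_eq)
    show "\<exists>S. S \<subseteq> {0, 1, 2} \<and> AS_indep L (\<lambda>i. (\<sigma> ^^ i) a) S \<and> card S = 3"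
      by (rule exI[of _ "{0, 1, 2}"]) (simp add: indep_char nR0 nR1 nR2 R01 R012 R nR1[simplified] R01[simplified] R012[simplified] R(1)[simplified])
    fix S :: "nat set" assume S: "S \<subseteq> {0, 1, 2}"
    then have "card S \<le> card {0, 1, 2::nat}" by (rule card_mono[rotated]) simp
    then show "card S \<le> 3" by simp
  qed
  show "subgroup_generated G H0 \<cong> product_group {..<3::nat} (\<lambda>_. integer_mod_group 2)"
  proof (rule H_iso)
    fix r s assume r: "r \<in> H0" and s: "s \<in> H0" and e: "\<And>i. i < 3 \<Longrightarrow> eps r i = eps s i"
    show "r = s" using eps3[OF r s] e[of 0] e[of 1] e[of 2] by simp
  next
    have w0: "\<exists>x y z. PP x y z \<and> z"
    proof -
      obtain r where "r \<in> H0" "oddc r {2}" using nonrel_odd[of "{2}"] nR2 by auto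
      then show ?thesis using oddc_vals[of r] by (intro PP_wit[where Q="\<lambda>x y z. z"]) auto
    qed
    have w1: "\<exists>x y z. PP x y z \<and> y"
    proof -
      obtain r where "r \<in> H0" "oddc r {1}" using nonrel_odd[of "{1}"] nR1 by auto
      then show ?thesis using oddc_vals[of r] by (intro PP_wit[where Q="\<lambda>x y z. y"]) auto
    qed
    have w2: "\<exists>x y z. PP x y z \<and> (y \<noteq> z)"
    proof -
      obtain r where "r \<in> H0" "oddc r {1, 2}" using nonrel_odd[of "{1, 2}"] R(1) by auto
      then show ?thesis using oddc_vals[of r] by (intro PP_wit[where Q="\<lambda>x y z. (y \<noteq> z)"]) auto
    qed
    have w3: "\<exists>x y z. PP x y z \<and> x"
    proof -
      obtain r where "r \<in> H0" "oddc r {0}" using nonrel_odd[of "{0}"] nR0 by auto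
      then show ?thesis using oddc_vals[of r] by (intro PP_wit[where Q="\<lambda>x y z. x"]) auto
    qed
    have w4: "\<exists>x y z. PP x y z \<and> (x \<noteq> z)"
    proof -
      obtain r where "r \<in> H0" "oddc r {0, 2}" using nonrel_odd[of "{0, 2}"] R(2) by auto
      then show ?thesis using oddc_vals[of r] by (intro PP_wit[where Q="\<lambda>x y z. (x \<noteq> z)"]) auto
    qed
    have w5: "\<exists>x y z. PP x y z \<and> (x \<noteq> y)"
    proof -
      obtain r where "r \<in> H0" "oddc r {0, 1}" using nonrel_odd[of "{0, 1}"] R01 by auto
      then show ?thesis using oddc_vals[of r] by (intro PP_wit[where Q="\<lambda>x y z. (x \<noteq> y)"]) auto
    qed
    have w6: "\<exists>x y z. PP x y z \<and> ((x \<noteq> y) \<noteq> z)"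
    proof -
      obtain r where "r \<in> H0" "oddc r {0, 1, 2}" using nonrel_odd[of "{0, 1, 2}"] R012 by auto
      then show ?thesis using oddc_vals[of r] by (intro PP_wit[where Q="\<lambda>x y z. ((x \<noteq> y) \<noteq> z)"]) auto
    qed
    fix b :: "nat \<Rightarrow> bool"
    have "PP (b 0) (b 1) (b 2)" by (rule sat_C[of PP, OF PP_cl w0 w1 w2 w3 w4 w5 w6 PP_0])
    then obtain r where r: "r \<in> H0" "eps r 0 = b 0" "eps r 1 = b 1" "eps r 2 = b 2" unfolding PP_def by blast
    have "\<forall>i<3. eps r i = b i"
    proof (intro allI impI)
      fix i :: nat assume "i < 3" then have "i = 0 \<or> i = 1 \<or> i = 2" by auto
      then show "eps r i = b i" using r by auto
    qed
    then show "\<exists>r\<in>H0. \<forall>i<3. eps r i = b i" using r(1) by blast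
  qed simp
qed

theorem main:
  "\<exists>H C. semidirect (Gal N K) H C \<and>
     subgroup_generated (Gal N K) H \<cong> product_group {..<AS_rank L (\<lambda>i. (\<sigma> ^^ i) a) {0, 1, 2}} (\<lambda>_. integer_mod_group 2) \<and>
     subgroup_generated (Gal N K) C \<cong> integer_mod_group 3"
proof -
  have "subgroup_generated G H0 \<cong> product_group {..<AS_rank L (\<lambda>i. (\<sigma> ^^ i) a) {0, 1, 2}} (\<lambda>_. integer_mod_group 2)"
  proof (cases "R {0, 1}")
    case True then show ?thesis using caseA(2)[OF True] by (simp only: caseA(1)[OF True])
  next
    case F: False
    show ?thesis
    proof (cases "R {0, 1, 2}")
      case True then show ?thesis using caseB(2)[OF F True] by (simp only: caseB(1)[OF F True])
    next
      case False then show ?thesis using caseC(2)[OF F False] by (simp only: caseC(1)[OF F False])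
    qed
  qed
  then show ?thesis using semi CC_iso by blast
qed

end

theorem mainTheorem3:
  fixes K L M N :: "'a::field set" and \<sigma> :: "'a \<Rightarrow> 'a" and a :: 'a and d :: nat
  assumes char2: "(2::'a) = 0"
    and KL: "galois_ext L K" and GLK: "Gal L K \<cong> integer_mod_group 3"
    and LM: "galois_ext M L" and GML: "Gal M L \<cong> integer_mod_group 2"
    and sigma: "\<sigma> \<in> carrier (Gal L K)"
    and sigma_gen: "generate (Gal L K) {\<sigma>} = carrier (Gal L K)"
    and aL: "a \<in> L"
    and Ma: "\<exists>\<alpha>\<in>M. \<alpha> ^ 2 - \<alpha> = a \<and> M = {l + m * \<alpha> | l m. l \<in> L \<and> m \<in> L}"
    and d: "d = AS_rank L (\<lambda>i. (\<sigma> ^^ i) a) {0, 1, 2}"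
    and N: "galois_closure N M K"
  shows "\<exists>H C. semidirect (Gal N K) H C \<and>
           subgroup_generated (Gal N K) H \<cong> product_group {..<d} (\<lambda>_. integer_mod_group 2) \<and>
           subgroup_generated (Gal N K) C \<cong> integer_mod_group 3"
proof -
  interpret setting K L M N \<sigma> a
    by (unfold_locales; (rule assms)?)
  show ?thesis unfolding assms(10) by (rule main)
qed

end
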